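(* Let $T$ be a bounded, linear, positive operator on $L^2(G,\mathbb{C}^{s\times r})$ such that $\langle T\mathbf{f},\mathbf{g}\rangle=\langle\mathbf{f},T^*\mathbf{g}\rangle$ for all $\mathbf{f},\mathbf{g}\in L^2(G,\mathbb{C}^{s\times r})$. Then $\langle T^{1/2}\mathbf{f},\mathbf{g}\rangle=\langle\mathbf{f},(T^{1/2})^*\mathbf{g}\rangle$ for all $\mathbf{f},\mathbf{g}\in L^2(G,\mathbb{C}^{s\times r})$.
   Context: $G$ is a locally compact abelian group that is metrizable and $\sigma$-compact, with Haar measure $\mu_G$; $s,r\in\mathbb{N}$. $L^2(G,\mathbb{C}^{s\times r})$ is the space of $s\times r$ matrices $\mathbf{f}=[f_{ij}]$ with all entries in $L^2(G)$. The matrix-valued inner product is $\langle \mathbf{f},\mathbf{g}\rangle=\int_G \mathbf{f}(x)\mathbf{g}^*(x)\,d\mu_G\in M_s(\mathbb{C})$ (entrywise integral, $\mathbf{g}^*$ conjugate transpose). $L^2(G,\mathbb{C}^{s\times r})$ is a Hilbert space with inner product $\langle \mathbf{f},\mathbf{g}\rangle_{L^2}=\mathrm{tr}\langle \mathbf{f},\mathbf{g}\rangle$ and Frobenius norm; $T^*$ denotes the Hilbert-adjoint with respect to this inner product. $T$ is positive if $T^*=T$ and $\mathrm{tr}\langle T\mathbf{f},\mathbf{f}\rangle\ge0$ for all $\mathbf{f}$. $T^{1/2}$ denotes the unique bounded positive operator $W$ with $W^2=T$. *)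

theory Defs
  imports "HOL-Analysis.Analysis"
begin

text \<open>G is modelled by a type 'g that is an abelian topological group whose topology
  is given by a metric (metrizable); local compactness and sigma-compactness are
  stated explicitly.\<close>

definition locally_compact_sigma_compact :: "'g::{topological_ab_group_add, metric_space} itself \<Rightarrow> bool" where
  "locally_compact_sigma_compact _ \<longleftrightarrow>
     (\<forall>x::'g. \<exists>U K. open U \<and> compact K \<and> x \<in> U \<and> U \<subseteq> K) \<and>
     (\<exists>K :: nat \<Rightarrow> 'g set. (\<forall>n. compact (K n)) \<and> (\<Union>n. K n) = UNIV)"

definition haar_measure :: "'g::{topological_ab_group_add, metric_space} measure \<Rightarrow> bool" where
  "haar_measure \<mu> \<longleftrightarrow>
     sets \<mu> = sets borel \<and>
     (\<forall>A\<in>sets borel. \<forall>a::'g. emeasure \<mu> ((\<lambda>x. a + x) ` A) = emeasure \<mu> A) \<and>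
     (\<forall>K. compact K \<longrightarrow> emeasure \<mu> K < \<infinity>) \<and>
     (\<forall>U. open U \<and> U \<noteq> {} \<longrightarrow> emeasure \<mu> U > 0) \<and>
     (\<forall>A\<in>sets borel. emeasure \<mu> A = (INF U\<in>{U. open U \<and> A \<subseteq> U}. emeasure \<mu> U)) \<and>
     (\<forall>U. open U \<longrightarrow> emeasure \<mu> U = (SUP K\<in>{K. compact K \<and> K \<subseteq> U}. emeasure \<mu> K))"

text \<open>An s x r complex matrix is an element of complex^'r^'s (rows indexed by 's,
  columns by 'r). Elements of L^2 are represented by functions; equality in L^2 is
  equality almost everywhere.\<close>

type_synonym ('g, 'r, 's) mfun = "'g \<Rightarrow> complex^'r^'s"

definition L2 :: "'g measure \<Rightarrow> ('g, 'r::finite, 's::finite) mfun set" where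
  "L2 \<mu> = {f. \<forall>i j. (\<lambda>x. f x $ i $ j) \<in> borel_measurable \<mu> \<and>
                     integrable \<mu> (\<lambda>x. (cmod (f x $ i $ j))^2)}"

definition mip :: "'g measure \<Rightarrow> ('g, 'r::finite, 's::finite) mfun \<Rightarrow> ('g, 'r, 's) mfun \<Rightarrow> complex^'s^'s" where
  "mip \<mu> f g = (\<chi> i k. LINT x|\<mu>. (\<Sum>j\<in>UNIV. f x $ i $ j * cnj (g x $ k $ j)))"

definition mtrace :: "complex^'s^'s \<Rightarrow> complex" where
  "mtrace A = (\<Sum>i\<in>UNIV. A $ i $ i)"

definition hip :: "'g measure \<Rightarrow> ('g, 'r::finite, 's::finite) mfun \<Rightarrow> ('g, 'r, 's) mfun \<Rightarrow> complex" where
  "hip \<mu> f g = mtrace (mip \<mu> f g)"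

definition L2norm :: "'g measure \<Rightarrow> ('g, 'r::finite, 's::finite) mfun \<Rightarrow> real" where
  "L2norm \<mu> f = sqrt (Re (hip \<mu> f f))"

definition madd :: "('g, 'r::finite, 's::finite) mfun \<Rightarrow> ('g, 'r, 's) mfun \<Rightarrow> ('g, 'r, 's) mfun" where
  "madd f g = (\<lambda>x. \<chi> i j. f x $ i $ j + g x $ i $ j)"

definition msmult :: "complex \<Rightarrow> ('g, 'r::finite, 's::finite) mfun \<Rightarrow> ('g, 'r, 's) mfun" where
  "msmult c f = (\<lambda>x. \<chi> i j. c * f x $ i $ j)"

definition bounded_linear_op :: "'g measure \<Rightarrow> (('g, 'r::finite, 's::finite) mfun \<Rightarrow> ('g, 'r, 's) mfun) \<Rightarrow> bool" where
  "bounded_linear_op \<mu> T \<longleftrightarrow>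
     (\<forall>f\<in>L2 \<mu>. T f \<in> L2 \<mu>) \<and>
     (\<forall>f\<in>L2 \<mu>. \<forall>g\<in>L2 \<mu>. (AE x in \<mu>. f x = g x) \<longrightarrow> (AE x in \<mu>. T f x = T g x)) \<and>
     (\<forall>f\<in>L2 \<mu>. \<forall>g\<in>L2 \<mu>. \<forall>a b. AE x in \<mu>. T (madd (msmult a f) (msmult b g)) x
                                    = madd (msmult a (T f)) (msmult b (T g)) x) \<and>
     (\<exists>C. \<forall>f\<in>L2 \<mu>. L2norm \<mu> (T f) \<le> C * L2norm \<mu> f)"

definition is_adjoint :: "'g measure \<Rightarrow> (('g, 'r::finite, 's::finite) mfun \<Rightarrow> ('g, 'r, 's) mfun)
                           \<Rightarrow> (('g, 'r, 's) mfun \<Rightarrow> ('g, 'r, 's) mfun) \<Rightarrow> bool" where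
  "is_adjoint \<mu> T Ts \<longleftrightarrow> bounded_linear_op \<mu> Ts \<and>
     (\<forall>f\<in>L2 \<mu>. \<forall>g\<in>L2 \<mu>. hip \<mu> (T f) g = hip \<mu> f (Ts g))"

definition positive_op :: "'g measure \<Rightarrow> (('g, 'r::finite, 's::finite) mfun \<Rightarrow> ('g, 'r, 's) mfun) \<Rightarrow> bool" where
  "positive_op \<mu> T \<longleftrightarrow> is_adjoint \<mu> T T \<and>
     (\<forall>f\<in>L2 \<mu>. Im (hip \<mu> (T f) f) = 0 \<and> Re (hip \<mu> (T f) f) \<ge> 0)"

text \<open>W is a (hence the, up to a.e. equality) square root T^{1/2} of T: bounded, positive, W^2 = T.\<close>
definition is_sqrt_op :: "'g measure \<Rightarrow> (('g, 'r::finite, 's::finite) mfun \<Rightarrow> ('g, 'r, 's) mfun)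
                           \<Rightarrow> (('g, 'r, 's) mfun \<Rightarrow> ('g, 'r, 's) mfun) \<Rightarrow> bool" where
  "is_sqrt_op \<mu> T W \<longleftrightarrow> bounded_linear_op \<mu> W \<and> positive_op \<mu> W \<and>
     (\<forall>f\<in>L2 \<mu>. AE x in \<mu>. W (W f) x = T f x)"

end

theory Submission
  imports Defs
begin


definition aeq :: "'g measure \<Rightarrow> ('g \<Rightarrow> 'a) \<Rightarrow> ('g \<Rightarrow> 'a) \<Rightarrow> bool" where
  "aeq \<mu> f g \<longleftrightarrow> (AE x in \<mu>. f x = g x)"

lemma L2_meas: "f \<in> L2 \<mu> \<Longrightarrow> (\<lambda>x. f x $ i $ j) \<in> borel_measurable \<mu>"
  by (simp add: L2_def)

lemma L2_int: "f \<in> L2 \<mu> \<Longrightarrow> integrable \<mu> (\<lambda>x. (cmod (f x $ i $ j))^2)"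
  by (simp add: L2_def)

lemma prod_int:
  assumes "f \<in> L2 \<mu>" "g \<in> L2 \<mu>"
  shows "integrable \<mu> (\<lambda>x. f x $ i $ j * cnj (g x $ k $ l))"
proof (rule Bochner_Integration.integrable_bound)
  show "integrable \<mu> (\<lambda>x. (cmod (f x $ i $ j))^2 + (cmod (g x $ k $ l))^2)"
    using L2_int[OF assms(1)] L2_int[OF assms(2)] by auto
  show "(\<lambda>x. f x $ i $ j * cnj (g x $ k $ l)) \<in> borel_measurable \<mu>"
  proof -
    have c: "(\<lambda>x. cnj (g x $ k $ l)) \<in> borel_measurable \<mu>"
      by (rule borel_measurable_continuous_on[OF continuous_on_cnj[OF continuous_on_id] L2_meas[OF assms(2)]])
    show ?thesis using L2_meas[OF assms(1)] c by measurable
  qed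
  show "AE x in \<mu>. norm (f x $ i $ j * cnj (g x $ k $ l)) \<le> norm ((cmod (f x $ i $ j))^2 + (cmod (g x $ k $ l))^2)"
  proof (rule AE_I2)
    fix x
    have "cmod (f x $ i $ j) * cmod (g x $ k $ l) \<le> (cmod (f x $ i $ j))^2 + (cmod (g x $ k $ l))^2"
    proof -
      define a where "a = cmod (f x $ i $ j)"
      define b where "b = cmod (g x $ k $ l)"
      have "0 \<le> (a - b)^2" by simp
      then have h1: "2*(a*b) \<le> a^2 + b^2" by (simp add: power2_diff algebra_simps)
      have "0 \<le> a * b" by (simp add: a_def b_def)
      with h1 have "a * b \<le> a^2 + b^2" by linarith
      then show ?thesis by (simp add: a_def b_def)
    qed
    then show "norm (f x $ i $ j * cnj (g x $ k $ l)) \<le> norm ((cmod (f x $ i $ j))^2 + (cmod (g x $ k $ l))^2)"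
      by (simp add: norm_mult)
  qed
qed

lemma sumprod_int:
  assumes "f \<in> L2 \<mu>" "g \<in> L2 \<mu>"
  shows "integrable \<mu> (\<lambda>x. \<Sum>j\<in>UNIV. f x $ i $ j * cnj (g x $ k $ j))"
  using prod_int[OF assms] by auto

lemma madd_L2:
  assumes "f \<in> L2 \<mu>" "g \<in> L2 \<mu>"
  shows "madd f g \<in> L2 \<mu>"
  unfolding L2_def mem_Collect_eq
proof (intro allI conjI)
  fix i j
  show m: "(\<lambda>x. madd f g x $ i $ j) \<in> borel_measurable \<mu>"
    using L2_meas[OF assms(1)] L2_meas[OF assms(2)] by (simp add: madd_def)
  show "integrable \<mu> (\<lambda>x. (cmod (madd f g x $ i $ j))\<^sup>2)"
  proof (rule Bochner_Integration.integrable_bound)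
    show "integrable \<mu> (\<lambda>x. 2*(cmod (f x $ i $ j))^2 + 2*(cmod (g x $ i $ j))^2)"
      using L2_int[OF assms(1)] L2_int[OF assms(2)] by auto
    show "(\<lambda>x. (cmod (madd f g x $ i $ j))\<^sup>2) \<in> borel_measurable \<mu>"
      using m by measurable
    show "AE x in \<mu>. norm ((cmod (madd f g x $ i $ j))\<^sup>2) \<le> norm (2*(cmod (f x $ i $ j))^2 + 2*(cmod (g x $ i $ j))^2)"
    proof (rule AE_I2)
      fix x
      have t: "cmod (f x $ i $ j + g x $ i $ j) \<le> cmod (f x $ i $ j) + cmod (g x $ i $ j)"
        by (rule norm_triangle_ineq)
      have "(cmod (f x $ i $ j + g x $ i $ j))^2 \<le> (cmod (f x $ i $ j) + cmod (g x $ i $ j))^2"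
        using t by (simp add: power_mono)
      also have "\<dots> \<le> 2*(cmod (f x $ i $ j))^2 + 2*(cmod (g x $ i $ j))^2"
      proof -
        have "0 \<le> (cmod (f x $ i $ j) - cmod (g x $ i $ j))^2" by simp
        then show ?thesis by (simp add: power2_diff power2_sum algebra_simps)
      qed
      finally show "norm ((cmod (madd f g x $ i $ j))\<^sup>2) \<le> norm (2*(cmod (f x $ i $ j))^2 + 2*(cmod (g x $ i $ j))^2)"
        by (simp add: madd_def)
    qed
  qed
qed

lemma msmult_L2:
  assumes "f \<in> L2 \<mu>"
  shows "msmult c f \<in> L2 \<mu>"
  unfolding L2_def mem_Collect_eq
proof (intro allI conjI)
  fix i j
  show "(\<lambda>x. msmult c f x $ i $ j) \<in> borel_measurable \<mu>"
    using L2_meas[OF assms(1)] by (simp add: msmult_def)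
  show "integrable \<mu> (\<lambda>x. (cmod (msmult c f x $ i $ j))\<^sup>2)"
    using L2_int[OF assms(1), of i j] by (simp add: msmult_def norm_mult power_mult_distrib)
qed

lemma zero_L2: "(\<lambda>x. 0) \<in> L2 \<mu>"
  by (simp add: L2_def)

lemma mip_entry: "mip \<mu> f g $ i $ k = (LINT x|\<mu>. (\<Sum>j\<in>UNIV. f x $ i $ j * cnj (g x $ k $ j)))"
  by (simp add: mip_def)

lemma hip_entry: "hip \<mu> f g = (\<Sum>i\<in>UNIV. LINT x|\<mu>. (\<Sum>j\<in>UNIV. f x $ i $ j * cnj (g x $ i $ j)))"
  by (simp add: hip_def mtrace_def mip_def)

lemma mip_lin1:
  assumes "f \<in> L2 \<mu>" "g \<in> L2 \<mu>" "h \<in> L2 \<mu>"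
  shows "mip \<mu> (madd (msmult a f) (msmult b g)) h $ i $ k = a * mip \<mu> f h $ i $ k + b * mip \<mu> g h $ i $ k"
proof -
  have "mip \<mu> (madd (msmult a f) (msmult b g)) h $ i $ k =
    (LINT x|\<mu>. a * (\<Sum>j\<in>UNIV. f x $ i $ j * cnj (h x $ k $ j)) + b * (\<Sum>j\<in>UNIV. g x $ i $ j * cnj (h x $ k $ j)))"
    unfolding mip_entry madd_def msmult_def
    by (simp add: sum_distrib_left sum.distrib algebra_simps)
  also have "\<dots> = a * mip \<mu> f h $ i $ k + b * mip \<mu> g h $ i $ k"
    using sumprod_int[OF assms(1,3), of i k] sumprod_int[OF assms(2,3), of i k]
    by (simp add: mip_entry)
  finally show ?thesis .
qed

lemma hip_lin1:
  assumes "f \<in> L2 \<mu>" "g \<in> L2 \<mu>" "h \<in> L2 \<mu>"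
  shows "hip \<mu> (madd (msmult a f) (msmult b g)) h = a * hip \<mu> f h + b * hip \<mu> g h"
  unfolding hip_def mtrace_def using mip_lin1[OF assms]
  by (simp add: sum.distrib sum_distrib_left)

lemma mip_cnj: "cnj (mip \<mu> f g $ i $ k) = mip \<mu> g f $ k $ i"
proof -
  have "cnj (mip \<mu> f g $ i $ k) = (LINT x|\<mu>. cnj (\<Sum>j\<in>UNIV. f x $ i $ j * cnj (g x $ k $ j)))"
    unfolding mip_entry by (rule Bochner_Integration.integral_cnj[symmetric])
  then show ?thesis unfolding mip_entry by (simp add: mult.commute)
qed

lemma hip_cnj: "hip \<mu> g f = cnj (hip \<mu> f g)"
  unfolding hip_def mtrace_def by (simp add: mip_cnj)

lemma mip_aeq1:
  assumes "f \<in> L2 \<mu>" "f' \<in> L2 \<mu>" "g \<in> L2 \<mu>" "aeq \<mu> f f'"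
  shows "mip \<mu> f g = mip \<mu> f' g"
proof -
  have "mip \<mu> f g $ i $ k = mip \<mu> f' g $ i $ k" for i k
    unfolding mip_entry
  proof (rule integral_cong_AE)
    show "(\<lambda>x. \<Sum>j\<in>UNIV. f x $ i $ j * cnj (g x $ k $ j)) \<in> borel_measurable \<mu>"
      using sumprod_int[OF assms(1,3)] by auto
    show "(\<lambda>x. \<Sum>j\<in>UNIV. f' x $ i $ j * cnj (g x $ k $ j)) \<in> borel_measurable \<mu>"
      using sumprod_int[OF assms(2,3)] by auto
    show "AE x in \<mu>. (\<Sum>j\<in>UNIV. f x $ i $ j * cnj (g x $ k $ j)) = (\<Sum>j\<in>UNIV. f' x $ i $ j * cnj (g x $ k $ j))"
      using assms(4) unfolding aeq_def by (rule AE_mp) auto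
  qed
  then show ?thesis by (simp add: vec_eq_iff)
qed

lemma mip_aeq2:
  assumes "f \<in> L2 \<mu>" "g \<in> L2 \<mu>" "g' \<in> L2 \<mu>" "aeq \<mu> g g'"
  shows "mip \<mu> f g = mip \<mu> f g'"
proof -
  have "mip \<mu> f g $ i $ k = mip \<mu> f g' $ i $ k" for i k
    using mip_aeq1[OF assms(2,3,1,4)] mip_cnj[of \<mu> g f k i] mip_cnj[of \<mu> g' f k i] by simp
  then show ?thesis by (simp add: vec_eq_iff)
qed

lemma hip_aeq1:
  "f \<in> L2 \<mu> \<Longrightarrow> f' \<in> L2 \<mu> \<Longrightarrow> g \<in> L2 \<mu> \<Longrightarrow> aeq \<mu> f f' \<Longrightarrow> hip \<mu> f g = hip \<mu> f' g"
  unfolding hip_def using mip_aeq1 by metis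

lemma hip_aeq2:
  "f \<in> L2 \<mu> \<Longrightarrow> g \<in> L2 \<mu> \<Longrightarrow> g' \<in> L2 \<mu> \<Longrightarrow> aeq \<mu> g g' \<Longrightarrow> hip \<mu> f g = hip \<mu> f g'"
  unfolding hip_def using mip_aeq2 by metis

lemma hip_self:
  assumes "f \<in> L2 \<mu>"
  shows "hip \<mu> f f = complex_of_real (\<Sum>i\<in>UNIV. LINT x|\<mu>. (\<Sum>j\<in>UNIV. (cmod (f x $ i $ j))^2))"
proof -
  have e: "\<And>z. z * cnj z = complex_of_real ((cmod z)^2)" by (metis complex_norm_square)
  have "hip \<mu> f f = (\<Sum>i\<in>UNIV. LINT x|\<mu>. complex_of_real (\<Sum>j\<in>UNIV. (cmod (f x $ i $ j))^2))"
    unfolding hip_entry e of_real_sum by simp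
  then show ?thesis by (simp only: of_real_sum[symmetric] integral_complex_of_real)
qed

lemma hip_self_nonneg: "f \<in> L2 \<mu> \<Longrightarrow> Re (hip \<mu> f f) \<ge> 0"
  by (simp add: hip_self sum_nonneg)

lemma hip_self_real: "f \<in> L2 \<mu> \<Longrightarrow> Im (hip \<mu> f f) = 0"
  by (simp add: hip_self)

lemma hip_self_zero:
  assumes f: "f \<in> L2 \<mu>" and z: "Re (hip \<mu> f f) = 0"
  shows "aeq \<mu> f (\<lambda>x. 0)"
proof -
  have int: "integrable \<mu> (\<lambda>x. \<Sum>j\<in>UNIV. (cmod (f x $ i $ j))^2)" for i
    using L2_int[OF f] by auto
  have nn: "0 \<le> (LINT x|\<mu>. (\<Sum>j\<in>UNIV. (cmod (f x $ i $ j))^2))" for i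
    by (simp add: sum_nonneg)
  have z0: "(\<Sum>i\<in>UNIV. LINT x|\<mu>. (\<Sum>j\<in>UNIV. (cmod (f x $ i $ j))^2)) = 0"
    using z by (simp add: hip_self[OF f])
  have "\<forall>i. (LINT x|\<mu>. (\<Sum>j\<in>UNIV. (cmod (f x $ i $ j))^2)) = 0"
  proof
    fix i
    show "(LINT x|\<mu>. (\<Sum>j\<in>UNIV. (cmod (f x $ i $ j))^2)) = 0"
      using sum_nonneg_eq_0_iff[of UNIV "\<lambda>i. LINT x|\<mu>. (\<Sum>j\<in>UNIV. (cmod (f x $ i $ j))^2)", OF _ nn] z0
      by simp
  qed
  then have "AE x in \<mu>. (\<Sum>j\<in>UNIV. (cmod (f x $ i $ j))^2) = 0" for i
    using integral_nonneg_eq_0_iff_AE[OF int] by (simp add: sum_nonneg)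
  then have "AE x in \<mu>. \<forall>i\<in>UNIV. (\<Sum>j\<in>UNIV. (cmod (f x $ i $ j))^2) = 0"
    by (intro AE_finite_allI) auto
  then show ?thesis unfolding aeq_def
  proof (rule AE_mp, intro AE_I2 impI)
    fix x assume "\<forall>i\<in>UNIV. (\<Sum>j\<in>UNIV. (cmod (f x $ i $ j))^2) = 0"
    then have "\<forall>i j. f x $ i $ j = 0"
      by (simp add: sum_nonneg_eq_0_iff)
    then show "f x = 0" by (simp add: vec_eq_iff)
  qed
qed




definition msub :: "('g, 'r::finite, 's::finite) mfun \<Rightarrow> ('g, 'r, 's) mfun \<Rightarrow> ('g, 'r, 's) mfun" where
  "msub f g = madd f (msmult (-1) g)"

lemma aeq_refl[simp]: "aeq \<mu> f f" by (simp add: aeq_def)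
lemma aeq_sym: "aeq \<mu> f g \<Longrightarrow> aeq \<mu> g f" unfolding aeq_def by (rule AE_mp) auto
lemma aeq_trans: "aeq \<mu> f g \<Longrightarrow> aeq \<mu> g h \<Longrightarrow> aeq \<mu> f h"
  unfolding aeq_def by (erule AE_mp, erule AE_mp) auto
lemma aeq_madd: "aeq \<mu> f f' \<Longrightarrow> aeq \<mu> g g' \<Longrightarrow> aeq \<mu> (madd f g) (madd f' g')"
  unfolding aeq_def madd_def by (erule AE_mp, erule AE_mp) auto
lemma aeq_msmult: "aeq \<mu> f f' \<Longrightarrow> aeq \<mu> (msmult c f) (msmult c f')"
  unfolding aeq_def msmult_def by (erule AE_mp) auto
lemma aeq_msub: "aeq \<mu> f f' \<Longrightarrow> aeq \<mu> g g' \<Longrightarrow> aeq \<mu> (msub f g) (msub f' g')"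
  unfolding msub_def by (intro aeq_madd aeq_msmult)

lemma msmult_one[simp]: "msmult 1 f = f"
  by (simp add: msmult_def vec_eq_iff)

lemma msub_L2: "f \<in> L2 \<mu> \<Longrightarrow> g \<in> L2 \<mu> \<Longrightarrow> msub f g \<in> L2 \<mu>"
  unfolding msub_def by (intro madd_L2 msmult_L2)

lemma hip_madd1: "f \<in> L2 \<mu> \<Longrightarrow> g \<in> L2 \<mu> \<Longrightarrow> h \<in> L2 \<mu> \<Longrightarrow> hip \<mu> (madd f g) h = hip \<mu> f h + hip \<mu> g h"
  using hip_lin1[of f \<mu> g h 1 1] by simp
lemma hip_smult1: "f \<in> L2 \<mu> \<Longrightarrow> h \<in> L2 \<mu> \<Longrightarrow> hip \<mu> (msmult c f) h = c * hip \<mu> f h"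
proof -
  assume a: "f \<in> L2 \<mu>" "h \<in> L2 \<mu>"
  have "msmult c f = madd (msmult c f) (msmult 0 f)" by (simp add: madd_def msmult_def vec_eq_iff)
  then show ?thesis using hip_lin1[OF a(1) a(1) a(2), of c 0] by simp
qed
lemma hip_msub1: "f \<in> L2 \<mu> \<Longrightarrow> g \<in> L2 \<mu> \<Longrightarrow> h \<in> L2 \<mu> \<Longrightarrow> hip \<mu> (msub f g) h = hip \<mu> f h - hip \<mu> g h"
  unfolding msub_def by (simp add: hip_madd1 msmult_L2 hip_smult1)
lemma hip_madd2: "f \<in> L2 \<mu> \<Longrightarrow> g \<in> L2 \<mu> \<Longrightarrow> h \<in> L2 \<mu> \<Longrightarrow> hip \<mu> h (madd f g) = hip \<mu> h f + hip \<mu> h g"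
proof -
  assume a: "f \<in> L2 \<mu>" "g \<in> L2 \<mu>" "h \<in> L2 \<mu>"
  have "hip \<mu> h (madd f g) = cnj (hip \<mu> (madd f g) h)" by (rule hip_cnj)
  also have "\<dots> = cnj (hip \<mu> f h) + cnj (hip \<mu> g h)" using a by (simp add: hip_madd1)
  finally show ?thesis by (simp add: hip_cnj[of \<mu> h f] hip_cnj[of \<mu> h g])
qed
lemma hip_smult2: "f \<in> L2 \<mu> \<Longrightarrow> h \<in> L2 \<mu> \<Longrightarrow> hip \<mu> h (msmult c f) = cnj c * hip \<mu> h f"
proof -
  assume a: "f \<in> L2 \<mu>" "h \<in> L2 \<mu>"
  have "hip \<mu> h (msmult c f) = cnj (hip \<mu> (msmult c f) h)" by (rule hip_cnj)
  also have "\<dots> = cnj c * cnj (hip \<mu> f h)" using a by (simp add: hip_smult1)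
  finally show ?thesis by (simp add: hip_cnj[of \<mu> h f])
qed
lemma hip_msub2: "f \<in> L2 \<mu> \<Longrightarrow> g \<in> L2 \<mu> \<Longrightarrow> h \<in> L2 \<mu> \<Longrightarrow> hip \<mu> h (msub f g) = hip \<mu> h f - hip \<mu> h g"
proof -
  assume a: "f \<in> L2 \<mu>" "g \<in> L2 \<mu>" "h \<in> L2 \<mu>"
  have "hip \<mu> h (msub f g) = cnj (hip \<mu> (msub f g) h)" by (rule hip_cnj)
  also have "\<dots> = cnj (hip \<mu> f h) - cnj (hip \<mu> g h)" using a by (simp add: hip_msub1)
  finally show ?thesis by (simp add: hip_cnj[of \<mu> h f] hip_cnj[of \<mu> h g])
qed

lemma hip_zero2: "hip \<mu> f (\<lambda>x. 0) = 0"
  by (simp add: hip_entry)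

lemma hip_aeq_zero2: "f \<in> L2 \<mu> \<Longrightarrow> g \<in> L2 \<mu> \<Longrightarrow> aeq \<mu> g (\<lambda>x. 0) \<Longrightarrow> hip \<mu> f g = 0"
  using hip_aeq2[of f \<mu> g "\<lambda>x. 0"] zero_L2 hip_zero2 by metis

lemma Re_hip_sym: "Re (hip \<mu> g f) = Re (hip \<mu> f g)"
  by (simp add: hip_cnj[of \<mu> g f])

lemma msub_zero_aeq: "aeq \<mu> (msub f g) (\<lambda>x. 0) \<Longrightarrow> aeq \<mu> f g"
  unfolding aeq_def msub_def madd_def msmult_def
  by (erule AE_mp) (auto simp: vec_eq_iff)

lemma cs_Re:
  assumes f: "f \<in> L2 \<mu>" and g: "g \<in> L2 \<mu>"
  shows "\<bar>Re (hip \<mu> f g)\<bar> \<le> sqrt (Re (hip \<mu> f f)) * sqrt (Re (hip \<mu> g g))"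
proof -
  define a where "a = Re (hip \<mu> f f)"
  define b where "b = Re (hip \<mu> f g)"
  define c where "c = Re (hip \<mu> g g)"
  have a0: "a \<ge> 0" "c \<ge> 0" using hip_self_nonneg f g by (auto simp: a_def c_def)
  have quad: "0 \<le> a + 2 * t * b + t^2 * c" for t :: real
  proof -
    define h where "h = madd f (msmult (complex_of_real t) g)"
    have h: "h \<in> L2 \<mu>" using f g by (simp add: h_def madd_L2 msmult_L2)
    have "hip \<mu> h h = hip \<mu> f f + t * hip \<mu> f g + t * hip \<mu> g f + t * t * hip \<mu> g g"
      unfolding h_def using f g
      by (simp add: hip_madd1 hip_madd2 hip_smult1 hip_smult2 msmult_L2 madd_L2 algebra_simps)
    then have "Re (hip \<mu> h h) = a + 2 * t * b + t^2 * c"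
      by (simp add: a_def b_def c_def Re_hip_sym[of \<mu> g f] power2_eq_square)
    then show ?thesis using hip_self_nonneg[OF h] by simp
  qed
  have "b^2 \<le> a * c"
  proof (cases "c = 0")
    case True
    then have "aeq \<mu> g (\<lambda>x. 0)" using hip_self_zero g by (simp add: c_def)
    then have "b = 0" using hip_aeq_zero2[OF f g] by (simp add: b_def)
    then show ?thesis using a0 by simp
  next
    case False
    then have cp: "c > 0" using a0 by simp
    have "0 \<le> a + 2 * (-b/c) * b + (-b/c)^2 * c" by (rule quad)
    also have "\<dots> = a - b^2 / c" using cp by (simp add: power2_eq_square field_simps)
    finally have "b^2 / c \<le> a" by simp
    then show ?thesis using cp by (simp add: field_simps)
  qed
  then have "sqrt (b^2) \<le> sqrt (a * c)" by (rule real_sqrt_le_mono)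
  then show ?thesis by (simp add: a_def b_def c_def real_sqrt_mult)
qed

definition good :: "'g measure \<Rightarrow> (('g, 'r::finite, 's::finite) mfun \<Rightarrow> ('g, 'r, 's) mfun) \<Rightarrow> bool" where
  "good \<mu> X \<longleftrightarrow> (\<forall>f\<in>L2 \<mu>. X f \<in> L2 \<mu>) \<and>
     (\<forall>f\<in>L2 \<mu>. \<forall>g\<in>L2 \<mu>. aeq \<mu> f g \<longrightarrow> aeq \<mu> (X f) (X g)) \<and>
     (\<forall>f\<in>L2 \<mu>. \<forall>g\<in>L2 \<mu>. \<forall>a b. aeq \<mu> (X (madd (msmult a f) (msmult b g))) (madd (msmult a (X f)) (msmult b (X g))))"

definition sa :: "'g measure \<Rightarrow> (('g, 'r::finite, 's::finite) mfun \<Rightarrow> ('g, 'r, 's) mfun) \<Rightarrow> bool" where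
  "sa \<mu> X \<longleftrightarrow> (\<forall>f\<in>L2 \<mu>. \<forall>g\<in>L2 \<mu>. hip \<mu> (X f) g = hip \<mu> f (X g))"

definition pos :: "'g measure \<Rightarrow> (('g, 'r::finite, 's::finite) mfun \<Rightarrow> ('g, 'r, 's) mfun) \<Rightarrow> bool" where
  "pos \<mu> X \<longleftrightarrow> (\<forall>f\<in>L2 \<mu>. Re (hip \<mu> (X f) f) \<ge> 0)"

lemma blo_good: "bounded_linear_op \<mu> X \<Longrightarrow> good \<mu> X"
  unfolding bounded_linear_op_def good_def aeq_def by blast

lemma good_L2: "good \<mu> X \<Longrightarrow> f \<in> L2 \<mu> \<Longrightarrow> X f \<in> L2 \<mu>"
  unfolding good_def by blast
lemma good_aeq: "good \<mu> X \<Longrightarrow> f \<in> L2 \<mu> \<Longrightarrow> g \<in> L2 \<mu> \<Longrightarrow> aeq \<mu> f g \<Longrightarrow> aeq \<mu> (X f) (X g)"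
  unfolding good_def by blast
lemma good_lin: "good \<mu> X \<Longrightarrow> f \<in> L2 \<mu> \<Longrightarrow> g \<in> L2 \<mu> \<Longrightarrow>
    aeq \<mu> (X (madd (msmult a f) (msmult b g))) (madd (msmult a (X f)) (msmult b (X g)))"
  unfolding good_def by blast
lemma good_madd: "good \<mu> X \<Longrightarrow> f \<in> L2 \<mu> \<Longrightarrow> g \<in> L2 \<mu> \<Longrightarrow> aeq \<mu> (X (madd f g)) (madd (X f) (X g))"
  using good_lin[of \<mu> X f g 1 1] by simp
lemma good_msub: "good \<mu> X \<Longrightarrow> f \<in> L2 \<mu> \<Longrightarrow> g \<in> L2 \<mu> \<Longrightarrow> aeq \<mu> (X (msub f g)) (msub (X f) (X g))"
  using good_lin[of \<mu> X f g 1 "-1"] by (simp add: msub_def)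
lemma good_smult: "good \<mu> X \<Longrightarrow> f \<in> L2 \<mu> \<Longrightarrow> aeq \<mu> (X (msmult c f)) (msmult c (X f))"
proof -
  assume a: "good \<mu> X" "f \<in> L2 \<mu>"
  have e: "\<And>h. madd (msmult c h) (msmult 0 h) = msmult c h" by (simp add: madd_def msmult_def vec_eq_iff)
  show ?thesis using good_lin[OF a a(2), of c 0] by (simp only: e)
qed

lemma good_comp:
  fixes X Y :: "('g, 'r::finite, 's::finite) mfun \<Rightarrow> ('g, 'r, 's) mfun"
  shows "good \<mu> X \<Longrightarrow> good \<mu> Y \<Longrightarrow> good \<mu> (\<lambda>f. X (Y f))"
  unfolding good_def[of \<mu> "\<lambda>f. X (Y f)"]
proof (intro conjI ballI allI impI)
  assume X: "good \<mu> X" and Y: "good \<mu> Y"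
  fix f g :: "('g, 'r, 's) mfun" and a b :: complex assume f: "f \<in> L2 \<mu>" and g: "g \<in> L2 \<mu>"
  show "aeq \<mu> (X (Y (madd (msmult a f) (msmult b g)))) (madd (msmult a (X (Y f))) (msmult b (X (Y g))))"
    using good_aeq[OF X _ _ good_lin[OF Y f g]] good_lin[OF X good_L2[OF Y f] good_L2[OF Y g]]
      f g good_L2[OF Y] by (meson aeq_trans madd_L2 msmult_L2)
next
  assume X: "good \<mu> X" and Y: "good \<mu> Y"
  fix f g :: "('g, 'r, 's) mfun" assume "f \<in> L2 \<mu>" "g \<in> L2 \<mu>" "aeq \<mu> f g"
  then show "aeq \<mu> (X (Y f)) (X (Y g))" using X Y by (simp add: good_aeq good_L2)
next
  assume X: "good \<mu> X" and Y: "good \<mu> Y"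
  fix f :: "('g, 'r, 's) mfun" assume "f \<in> L2 \<mu>" then show "X (Y f) \<in> L2 \<mu>" using X Y by (simp add: good_L2)
qed

lemma good_sub:
  fixes X Y :: "('g, 'r::finite, 's::finite) mfun \<Rightarrow> ('g, 'r, 's) mfun"
  shows "good \<mu> X \<Longrightarrow> good \<mu> Y \<Longrightarrow> good \<mu> (\<lambda>f. msub (X f) (Y f))"
  unfolding good_def[of \<mu> "\<lambda>f. msub (X f) (Y f)"]
proof (intro conjI ballI allI impI)
  assume X: "good \<mu> X" and Y: "good \<mu> Y"
  fix f g :: "('g, 'r, 's) mfun" and a b :: complex assume f: "f \<in> L2 \<mu>" and g: "g \<in> L2 \<mu>"
  have e: "msub (madd (msmult a (X f)) (msmult b (X g))) (madd (msmult a (Y f)) (msmult b (Y g)))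
      = madd (msmult a (msub (X f) (Y f))) (msmult b (msub (X g) (Y g)))"
    by (simp add: msub_def madd_def msmult_def vec_eq_iff algebra_simps)
  show "aeq \<mu> (msub (X (madd (msmult a f) (msmult b g))) (Y (madd (msmult a f) (msmult b g))))
      (madd (msmult a (msub (X f) (Y f))) (msmult b (msub (X g) (Y g))))"
    using aeq_msub[OF good_lin[OF X f g, where a=a and b=b] good_lin[OF Y f g, where a=a and b=b]] e by simp
next
  assume X: "good \<mu> X" and Y: "good \<mu> Y"
  fix f g :: "('g, 'r, 's) mfun" assume "f \<in> L2 \<mu>" "g \<in> L2 \<mu>" "aeq \<mu> f g"
  then show "aeq \<mu> (msub (X f) (Y f)) (msub (X g) (Y g))" using X Y by (simp add: good_aeq aeq_msub)
next
  assume X: "good \<mu> X" and Y: "good \<mu> Y"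
  fix f :: "('g, 'r, 's) mfun" assume "f \<in> L2 \<mu>" then show "msub (X f) (Y f) \<in> L2 \<mu>" using X Y by (simp add: good_L2 msub_L2)
qed

lemma good_scal:
  fixes X :: "('g, 'r::finite, 's::finite) mfun \<Rightarrow> ('g, 'r, 's) mfun"
  shows "good \<mu> X \<Longrightarrow> good \<mu> (\<lambda>f. msmult c (X f))"
  unfolding good_def[of \<mu> "\<lambda>f. msmult c (X f)"]
proof (intro conjI ballI allI impI)
  assume X: "good \<mu> X"
  fix f g :: "('g, 'r, 's) mfun" and a b :: complex assume f: "f \<in> L2 \<mu>" and g: "g \<in> L2 \<mu>"
  have e: "msmult c (madd (msmult a (X f)) (msmult b (X g)))
      = madd (msmult a (msmult c (X f))) (msmult b (msmult c (X g)))"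
    by (simp add: madd_def msmult_def vec_eq_iff algebra_simps)
  show "aeq \<mu> (msmult c (X (madd (msmult a f) (msmult b g)))) (madd (msmult a (msmult c (X f))) (msmult b (msmult c (X g))))"
    using aeq_msmult[OF good_lin[OF X f g, where a=a and b=b], where c=c] e by simp
next
  assume X: "good \<mu> X"
  fix f g :: "('g, 'r, 's) mfun" assume "f \<in> L2 \<mu>" "g \<in> L2 \<mu>" "aeq \<mu> f g"
  then show "aeq \<mu> (msmult c (X f)) (msmult c (X g))" using X by (simp add: good_aeq aeq_msmult)
next
  assume X: "good \<mu> X"
  fix f :: "('g, 'r, 's) mfun" assume "f \<in> L2 \<mu>" then show "msmult c (X f) \<in> L2 \<mu>" using X by (simp add: good_L2 msmult_L2)
qed

lemma hip_cong1: "good \<mu> X \<Longrightarrow> f \<in> L2 \<mu> \<Longrightarrow> f' \<in> L2 \<mu> \<Longrightarrow> g \<in> L2 \<mu> \<Longrightarrow> aeq \<mu> f f' \<Longrightarrow> hip \<mu> f g = hip \<mu> f' g"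
  by (rule hip_aeq1)



definition comm :: "'g measure \<Rightarrow> (('g, 'r::finite, 's::finite) mfun \<Rightarrow> ('g, 'r, 's) mfun) \<Rightarrow> (('g, 'r, 's) mfun \<Rightarrow> ('g, 'r, 's) mfun) \<Rightarrow> bool" where
  "comm \<mu> X Q \<longleftrightarrow> (\<forall>x\<in>L2 \<mu>. aeq \<mu> (X (Q x)) (Q (X x)))"



primrec iterP :: "complex \<Rightarrow> (('g, 'r::finite, 's::finite) mfun \<Rightarrow> ('g, 'r, 's) mfun) \<Rightarrow> nat \<Rightarrow> (('g, 'r, 's) mfun \<Rightarrow> ('g, 'r, 's) mfun)" where
  "iterP c P 0 = (\<lambda>f. msmult c (P f))"
| "iterP c P (Suc n) = (\<lambda>f. msub (iterP c P n f) (iterP c P n (iterP c P n f)))"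



lemma step_good:
  fixes X :: "('g, 'r::finite, 's::finite) mfun \<Rightarrow> ('g, 'r, 's) mfun"
  shows "good \<mu> X \<Longrightarrow> good \<mu> (\<lambda>f. msub (X f) (X (X f)))"
  by (rule good_sub[OF _ good_comp])



lemma step_sa:
  fixes X :: "('g, 'r::finite, 's::finite) mfun \<Rightarrow> ('g, 'r, 's) mfun"
  assumes X: "good \<mu> X" "sa \<mu> X"
  shows "sa \<mu> (\<lambda>f. msub (X f) (X (X f)))"
  unfolding sa_def
proof (intro ballI)
  fix f g :: "('g, 'r, 's) mfun" assume f: "f \<in> L2 \<mu>" and g: "g \<in> L2 \<mu>"
  have L: "X f \<in> L2 \<mu>" "X (X f) \<in> L2 \<mu>" "X g \<in> L2 \<mu>" "X (X g) \<in> L2 \<mu>"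
    using X f g by (auto simp: good_L2)
  have sa: "\<And>u v. u \<in> L2 \<mu> \<Longrightarrow> v \<in> L2 \<mu> \<Longrightarrow> hip \<mu> (X u) v = hip \<mu> u (X v)"
    using X(2) by (simp add: sa_def)
  have "hip \<mu> (msub (X f) (X (X f))) g = hip \<mu> (X f) g - hip \<mu> (X (X f)) g"
    using L g by (simp add: hip_msub1)
  also have "\<dots> = hip \<mu> f (X g) - hip \<mu> f (X (X g))"
    using sa[OF f g] sa[OF L(1) g] sa[OF f L(3)] by simp
  also have "\<dots> = hip \<mu> f (msub (X g) (X (X g)))"
    using L f by (simp add: hip_msub2)
  finally show "hip \<mu> (msub (X f) (X (X f))) g = hip \<mu> f (msub (X g) (X (X g)))" .
qed



lemma step_comm:
  fixes X Q :: "('g, 'r::finite, 's::finite) mfun \<Rightarrow> ('g, 'r, 's) mfun"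
  assumes X: "good \<mu> X" and Q: "good \<mu> Q" and c: "comm \<mu> X Q"
  shows "comm \<mu> (\<lambda>f. msub (X f) (X (X f))) Q"
  unfolding comm_def
proof
  fix x :: "('g, 'r, 's) mfun" assume x: "x \<in> L2 \<mu>"
  have c': "\<And>u. u \<in> L2 \<mu> \<Longrightarrow> aeq \<mu> (X (Q u)) (Q (X u))" using c by (simp add: comm_def)
  have L: "X x \<in> L2 \<mu>" "X (X x) \<in> L2 \<mu>" "Q x \<in> L2 \<mu>" "X (Q x) \<in> L2 \<mu>" "Q (X x) \<in> L2 \<mu>"
    using X Q x by (auto simp: good_L2)
  have a1: "aeq \<mu> (X (X (Q x))) (Q (X (X x)))"
    using aeq_trans[OF good_aeq[OF X L(4) L(5) c'[OF x]] c'[OF L(1)]] .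
  have "aeq \<mu> (msub (X (Q x)) (X (X (Q x)))) (msub (Q (X x)) (Q (X (X x))))"
    using aeq_msub[OF c'[OF x] a1] .
  moreover have "aeq \<mu> (msub (Q (X x)) (Q (X (X x)))) (Q (msub (X x) (X (X x))))"
    using aeq_sym[OF good_msub[OF Q L(1) L(2)]] .
  ultimately show "aeq \<mu> (msub (X (Q x)) (X (X (Q x)))) (Q (msub (X x) (X (X x))))"
    by (rule aeq_trans)
qed



lemma step_form:
  fixes X :: "('g, 'r::finite, 's::finite) mfun \<Rightarrow> ('g, 'r, 's) mfun"
  assumes X: "good \<mu> X" "sa \<mu> X" and x: "x \<in> L2 \<mu>"
  shows "Re (hip \<mu> (msub (X x) (X (X x))) x) = Re (hip \<mu> (X x) x) - Re (hip \<mu> (X x) (X x))"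
proof -
  have L: "X x \<in> L2 \<mu>" "X (X x) \<in> L2 \<mu>" using X x by (auto simp: good_L2)
  have "hip \<mu> (X (X x)) x = hip \<mu> (X x) (X x)" using X(2) L x by (simp add: sa_def)
  then show ?thesis using L x by (simp add: hip_msub1)
qed



lemma step_bounds:
  fixes X :: "('g, 'r::finite, 's::finite) mfun \<Rightarrow> ('g, 'r, 's) mfun"
  assumes X: "good \<mu> X" "sa \<mu> X"
    and b: "\<And>y. y \<in> L2 \<mu> \<Longrightarrow> 0 \<le> Re (hip \<mu> (X y) y) \<and> Re (hip \<mu> (X y) y) \<le> Re (hip \<mu> y y)"
    and x: "x \<in> L2 \<mu>"
  shows "0 \<le> Re (hip \<mu> (msub (X x) (X (X x))) x) \<and> Re (hip \<mu> (msub (X x) (X (X x))) x) \<le> Re (hip \<mu> x x)"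
proof -
  have L: "X x \<in> L2 \<mu>" "X (X x) \<in> L2 \<mu>" using X x by (auto simp: good_L2)
  have sa: "\<And>u v. u \<in> L2 \<mu> \<Longrightarrow> v \<in> L2 \<mu> \<Longrightarrow> hip \<mu> (X u) v = hip \<mu> u (X v)"
    using X(2) by (simp add: sa_def)
  define z where "z = msub x (X x)"
  have z: "z \<in> L2 \<mu>" using L x by (simp add: z_def msub_L2)
  have Xz: "aeq \<mu> (X z) (msub (X x) (X (X x)))" unfolding z_def by (rule good_msub[OF X(1) x L(1)])
  have XzL: "X z \<in> L2 \<mu>" using X z by (simp add: good_L2)
  have "hip \<mu> (X z) z = hip \<mu> (msub (X x) (X (X x))) z"
    by (rule hip_aeq1[OF XzL msub_L2[OF L] z Xz])
  also have "\<dots> = hip \<mu> (X x) x - hip \<mu> (X x) (X x) - hip \<mu> (X (X x)) x + hip \<mu> (X (X x)) (X x)"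
    unfolding z_def using L x by (simp add: hip_msub1 hip_msub2 msub_L2)
  also have "hip \<mu> (X (X x)) x = hip \<mu> (X x) (X x)" using sa L x by simp
  finally have e: "Re (hip \<mu> (X z) z) = Re (hip \<mu> (X x) x) - 2 * Re (hip \<mu> (X x) (X x)) + Re (hip \<mu> (X (X x)) (X x))"
    by simp
  have "0 \<le> Re (hip \<mu> (X z) z)" using b[OF z] by simp
  moreover have "Re (hip \<mu> (X (X x)) (X x)) \<le> Re (hip \<mu> (X x) (X x))" using b[OF L(1)] by simp
  moreover have "Re (hip \<mu> (X x) (X x)) \<ge> 0" using hip_self_nonneg[OF L(1)] .
  ultimately show ?thesis using step_form[OF X x] e b[OF x] by linarith
qed



lemma real_lim_lemma:
  fixes v A B :: real
  assumes A: "A \<ge> 0" and B: "B \<ge> 0" and h: "\<And>N::nat. N \<ge> (1::nat) \<Longrightarrow> - (sqrt (A / N) * B) \<le> v"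
  shows "v \<ge> 0"
proof (rule ccontr)
  assume "\<not> v \<ge> 0"
  then have v: "v < 0" by simp
  define N :: nat where "N = nat (ceiling (A * B^2 / v^2)) + 1"
  have N1: "N \<ge> 1" by (simp add: N_def)
  have "real (nat (ceiling (A * B^2 / v^2))) \<ge> A * B^2 / v^2" by (rule real_nat_ceiling_ge)
  then have Np: "real N > A * B^2 / v^2" unfolding N_def by simp
  have "-v \<le> sqrt (A / N) * B" using h[OF N1] by simp
  then have "(-v)^2 \<le> (sqrt (A / N) * B)^2"
    using v by (intro power_mono) auto
  also have "\<dots> = A / N * B^2" using A N1 by (simp add: power_mult_distrib)
  finally have "v^2 \<le> A * B^2 / N" by simp
  then have "v^2 * N \<le> A * B^2" using N1 by (simp add: field_simps)
  moreover have "A * B^2 < v^2 * N" using Np v by (simp add: field_simps)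
  ultimately show False by simp
qed



lemma small_term:
  fixes a :: "nat \<Rightarrow> real"
  assumes "(\<Sum>k<N. a k) \<le> A" and "N \<ge> 1"
  shows "\<exists>k<N. a k \<le> A / N"
proof (rule ccontr)
  assume "\<not> ?thesis"
  then have "\<forall>k<N. a k > A / N" by auto
  then have "(\<Sum>k<N. A / N) < (\<Sum>k<N. a k)"
    using assms(2) by (intro sum_strict_mono) (auto simp: lessThan_empty_iff)
  then show False using assms by simp
qed





lemma key_lemma:
  fixes P Q :: "('g, 'r::finite, 's::finite) mfun \<Rightarrow> ('g, 'r, 's) mfun"
  assumes P: "good \<mu> P" "sa \<mu> P" "pos \<mu> P" and Pb: "\<exists>C. \<forall>f\<in>L2 \<mu>. L2norm \<mu> (P f) \<le> C * L2norm \<mu> f"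
    and Q: "good \<mu> Q" "sa \<mu> Q" "pos \<mu> Q" and PQ: "comm \<mu> P Q"
    and x: "x \<in> L2 \<mu>"
  shows "Re (hip \<mu> (Q (P x)) x) \<ge> 0"
proof -
  obtain C where C: "\<forall>f\<in>L2 \<mu>. L2norm \<mu> (P f) \<le> C * L2norm \<mu> f" using Pb by blast
  define C' where "C' = max C 1"
  have C'1: "C' \<ge> 1" by (simp add: C'_def)
  define r where "r = 1 / C'"
  have r: "r > 0" using C'1 by (simp add: r_def)
  define c where "c = complex_of_real r"
  define Pn where "Pn = iterP c P"
  have Pbound: "Re (hip \<mu> (P y) y) \<le> C' * Re (hip \<mu> y y)" if y: "y \<in> L2 \<mu>" for y
  proof -
    have Py: "P y \<in> L2 \<mu>" using P y by (simp add: good_L2)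
    have "Re (hip \<mu> (P y) y) \<le> \<bar>Re (hip \<mu> (P y) y)\<bar>" by simp
    also have "\<dots> \<le> L2norm \<mu> (P y) * L2norm \<mu> y" unfolding L2norm_def by (rule cs_Re[OF Py y])
    also have "\<dots> \<le> C * L2norm \<mu> y * L2norm \<mu> y"
      using C y hip_self_nonneg[OF y] by (intro mult_right_mono) (auto simp: L2norm_def)
    also have "\<dots> \<le> C' * L2norm \<mu> y * L2norm \<mu> y"
      using hip_self_nonneg[OF y] by (intro mult_right_mono) (auto simp: C'_def L2norm_def)
    also have "\<dots> = C' * Re (hip \<mu> y y)"
      using hip_self_nonneg[OF y] by (simp add: L2norm_def)
    finally show ?thesis .
  qed
  have inv: "good \<mu> (Pn n) \<and> sa \<mu> (Pn n) \<and> comm \<mu> (Pn n) Q \<and>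
     (\<forall>y\<in>L2 \<mu>. 0 \<le> Re (hip \<mu> (Pn n y) y) \<and> Re (hip \<mu> (Pn n y) y) \<le> Re (hip \<mu> y y))" for n
  proof (induction n)
    case 0
    have g: "good \<mu> (Pn 0)" using P by (simp add: Pn_def good_scal)
    have s: "sa \<mu> (Pn 0)" unfolding sa_def Pn_def iterP.simps
    proof (intro ballI)
      fix f g :: "('g, 'r, 's) mfun" assume f: "f \<in> L2 \<mu>" and g: "g \<in> L2 \<mu>"
      show "hip \<mu> (msmult c (P f)) g = hip \<mu> f (msmult c (P g))"
        using P f g by (simp add: hip_smult1 hip_smult2 good_L2 c_def sa_def)
    qed
    have cm: "comm \<mu> (Pn 0) Q" unfolding comm_def Pn_def iterP.simps
    proof
      fix y :: "('g, 'r, 's) mfun" assume y: "y \<in> L2 \<mu>"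
      have "aeq \<mu> (msmult c (P (Q y))) (msmult c (Q (P y)))"
        using PQ y by (simp add: comm_def aeq_msmult)
      moreover have "aeq \<mu> (msmult c (Q (P y))) (Q (msmult c (P y)))"
        using aeq_sym[OF good_smult[OF Q(1) good_L2[OF P(1) y]]] .
      ultimately show "aeq \<mu> (msmult c (P (Q y))) (Q (msmult c (P y)))" by (rule aeq_trans)
    qed
    have bd: "0 \<le> Re (hip \<mu> (Pn 0 y) y) \<and> Re (hip \<mu> (Pn 0 y) y) \<le> Re (hip \<mu> y y)" if y: "y \<in> L2 \<mu>" for y
    proof -
      have e: "Re (hip \<mu> (Pn 0 y) y) = r * Re (hip \<mu> (P y) y)"
        using P y by (simp add: Pn_def hip_smult1 good_L2 c_def)
      have "0 \<le> Re (hip \<mu> (P y) y)" using P(3) y by (simp add: pos_def)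
      moreover have "r * Re (hip \<mu> (P y) y) \<le> r * (C' * Re (hip \<mu> y y))"
        using Pbound[OF y] r by (simp add: mult_left_mono)
      moreover have "r * (C' * Re (hip \<mu> y y)) = Re (hip \<mu> y y)" using C'1 by (simp add: r_def)
      ultimately show ?thesis using e r by simp
    qed
    show ?case using g s cm bd by blast
  next
    case (Suc n)
    then have g: "good \<mu> (Pn n)" and s: "sa \<mu> (Pn n)" and cm: "comm \<mu> (Pn n) Q"
      and bd: "\<And>y. y \<in> L2 \<mu> \<Longrightarrow> 0 \<le> Re (hip \<mu> (Pn n y) y) \<and> Re (hip \<mu> (Pn n y) y) \<le> Re (hip \<mu> y y)"
      by auto
    have e: "Pn (Suc n) = (\<lambda>f. msub (Pn n f) (Pn n (Pn n f)))" by (simp add: Pn_def)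
    show ?case unfolding e
      using step_good[OF g] step_sa[OF g s] step_comm[OF g Q(1) cm] step_bounds[OF g s bd] by blast
  qed
  have PnL: "Pn n y \<in> L2 \<mu>" if "y \<in> L2 \<mu>" for n y using inv[of n] that by (simp add: good_L2)
  have tele1: "Re (hip \<mu> (Pn 0 x) x) = (\<Sum>k<n. Re (hip \<mu> (Pn k x) (Pn k x))) + Re (hip \<mu> (Pn n x) x)" for n
  proof (induction n)
    case 0 then show ?case by simp
  next
    case (Suc n)
    have e: "Pn (Suc n) x = msub (Pn n x) (Pn n (Pn n x))" by (simp add: Pn_def)
    have g: "good \<mu> (Pn n)" and s: "sa \<mu> (Pn n)" using inv[of n] by auto
    have "Re (hip \<mu> (Pn (Suc n) x) x) = Re (hip \<mu> (Pn n x) x) - Re (hip \<mu> (Pn n x) (Pn n x))"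
      unfolding e by (rule step_form[OF g s x])
    then show ?case using Suc by simp
  qed
  have tele2: "Re (hip \<mu> (Q (Pn n x)) x) \<le> Re (hip \<mu> (Q (Pn 0 x)) x)" for n
  proof (induction n)
    case 0 then show ?case by simp
  next
    case (Suc n)
    have g: "good \<mu> (Pn n)" and s: "sa \<mu> (Pn n)" and cm: "comm \<mu> (Pn n) Q" using inv[of n] by auto
    have L: "Pn n x \<in> L2 \<mu>" "Pn n (Pn n x) \<in> L2 \<mu>" "Q (Pn n x) \<in> L2 \<mu>" "Q (Pn n (Pn n x)) \<in> L2 \<mu>"
      "Pn n (Q (Pn n x)) \<in> L2 \<mu>"
      using PnL x Q(1) by (auto simp: good_L2)
    have e: "Pn (Suc n) x = msub (Pn n x) (Pn n (Pn n x))" by (simp add: Pn_def)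
    have "hip \<mu> (Q (Pn (Suc n) x)) x = hip \<mu> (msub (Q (Pn n x)) (Q (Pn n (Pn n x)))) x"
      unfolding e by (rule hip_aeq1[OF good_L2[OF Q(1) msub_L2[OF L(1,2)]] msub_L2[OF L(3,4)] x good_msub[OF Q(1) L(1,2)]])
    also have "\<dots> = hip \<mu> (Q (Pn n x)) x - hip \<mu> (Q (Pn n (Pn n x))) x"
      using L x by (simp add: hip_msub1)
    finally have e1: "hip \<mu> (Q (Pn (Suc n) x)) x = hip \<mu> (Q (Pn n x)) x - hip \<mu> (Q (Pn n (Pn n x))) x" .
    have "hip \<mu> (Q (Pn n (Pn n x))) x = hip \<mu> (Pn n (Q (Pn n x))) x"
      using hip_aeq1[OF L(4) L(5) x aeq_sym[OF cm[unfolded comm_def, rule_format, OF L(1)]]] .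
    also have "\<dots> = hip \<mu> (Q (Pn n x)) (Pn n x)" using s L x by (simp add: sa_def)
    finally have "Re (hip \<mu> (Q (Pn n (Pn n x))) x) \<ge> 0" using Q(3) L(1) by (simp add: pos_def)
    then show ?case using e1 Suc by simp
  qed
  define v where "v = Re (hip \<mu> (Q (Pn 0 x)) x)"
  have v_ge: "- (sqrt (Re (hip \<mu> x x) / N) * L2norm \<mu> (Q x)) \<le> v" if N: "N \<ge> (1::nat)" for N :: nat
  proof -
    have a: "0 \<le> Re (hip \<mu> (Pn N x) x)" using inv[of N] x by blast
    have b: "Re (hip \<mu> (Pn 0 x) x) \<le> Re (hip \<mu> x x)" using inv[of 0] x by blast
    have "(\<Sum>k<N. Re (hip \<mu> (Pn k x) (Pn k x))) \<le> Re (hip \<mu> x x)"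
      using tele1[of N] a b by linarith
    then obtain k where k: "k < N" "Re (hip \<mu> (Pn k x) (Pn k x)) \<le> Re (hip \<mu> x x) / N"
      using small_term[OF _ N] by blast
    have Qx: "Q x \<in> L2 \<mu>" using Q x by (simp add: good_L2)
    have "Re (hip \<mu> (Q (Pn k x)) x) = Re (hip \<mu> (Pn k x) (Q x))"
      using Q(2) PnL x by (simp add: sa_def)
    moreover have "\<bar>Re (hip \<mu> (Pn k x) (Q x))\<bar> \<le> L2norm \<mu> (Pn k x) * L2norm \<mu> (Q x)"
      unfolding L2norm_def by (rule cs_Re[OF PnL[OF x] Qx])
    moreover have "L2norm \<mu> (Pn k x) \<le> sqrt (Re (hip \<mu> x x) / N)"
      unfolding L2norm_def using k(2) by simp
    moreover have "L2norm \<mu> (Q x) \<ge> 0" using hip_self_nonneg[OF Qx] by (simp add: L2norm_def)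
    ultimately have "- (sqrt (Re (hip \<mu> x x) / N) * L2norm \<mu> (Q x)) \<le> Re (hip \<mu> (Q (Pn k x)) x)"
    proof -
      assume a1: "Re (hip \<mu> (Q (Pn k x)) x) = Re (hip \<mu> (Pn k x) (Q x))"
        and a2: "\<bar>Re (hip \<mu> (Pn k x) (Q x))\<bar> \<le> L2norm \<mu> (Pn k x) * L2norm \<mu> (Q x)"
        and a3: "L2norm \<mu> (Pn k x) \<le> sqrt (Re (hip \<mu> x x) / N)" and a4: "L2norm \<mu> (Q x) \<ge> 0"
      have "L2norm \<mu> (Pn k x) * L2norm \<mu> (Q x) \<le> sqrt (Re (hip \<mu> x x) / N) * L2norm \<mu> (Q x)"
        using a3 a4 by (rule mult_right_mono)
      then show ?thesis using a1 a2 by linarith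
    qed
    then show ?thesis using tele2[of k] by (simp add: v_def)
  qed
  have "v \<ge> 0"
    by (rule real_lim_lemma[OF hip_self_nonneg[OF x] _ v_ge])
       (use hip_self_nonneg[OF good_L2[OF Q(1) x]] in \<open>simp add: L2norm_def\<close>)
  moreover have "v = r * Re (hip \<mu> (Q (P x)) x)"
  proof -
    have PxL: "P x \<in> L2 \<mu>" using P x by (simp add: good_L2)
    have "hip \<mu> (Q (Pn 0 x)) x = hip \<mu> (msmult c (Q (P x))) x"
      unfolding Pn_def iterP.simps
      by (rule hip_aeq1[OF good_L2[OF Q(1) msmult_L2[OF PxL]] msmult_L2[OF good_L2[OF Q(1) PxL]] x good_smult[OF Q(1) PxL]])
    then show ?thesis using Q(1) PxL x by (simp add: v_def hip_smult1 good_L2 c_def)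
  qed
  ultimately show ?thesis using r by (simp add: zero_le_mult_iff)
qed




lemma polar_zero:
  fixes M :: "('g, 'r::finite, 's::finite) mfun \<Rightarrow> ('g, 'r, 's) mfun"
  assumes M: "good \<mu> M" "sa \<mu> M" and z: "\<And>x. x \<in> L2 \<mu> \<Longrightarrow> Re (hip \<mu> (M x) x) = 0"
    and x: "x \<in> L2 \<mu>"
  shows "aeq \<mu> (M x) (\<lambda>x. 0)"
proof -
  define y where "y = M x"
  have y: "y \<in> L2 \<mu>" using M x by (simp add: y_def good_L2)
  have My: "M y \<in> L2 \<mu>" using M y by (simp add: good_L2)
  define w where "w = madd x y"
  have w: "w \<in> L2 \<mu>" using x y by (simp add: w_def madd_L2)
  have "hip \<mu> (M w) w = hip \<mu> (madd y (M y)) w"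
    unfolding w_def y_def
    by (rule hip_aeq1[OF good_L2[OF M(1) madd_L2[OF x y[unfolded y_def]]] madd_L2[OF y[unfolded y_def] My[unfolded y_def]] w[unfolded w_def y_def] good_madd[OF M(1) x y[unfolded y_def]]])
  also have "\<dots> = hip \<mu> y x + hip \<mu> y y + hip \<mu> (M y) x + hip \<mu> (M y) y"
    unfolding w_def using x y My by (simp add: hip_madd1 hip_madd2 madd_L2)
  finally have e: "Re (hip \<mu> (M w) w) = Re (hip \<mu> y x) + Re (hip \<mu> y y) + Re (hip \<mu> (M y) x) + Re (hip \<mu> (M y) y)"
    by simp
  have "Re (hip \<mu> y x) = 0" using z[OF x] by (simp add: y_def)
  moreover have "Re (hip \<mu> (M y) y) = 0" using z[OF y] .
  moreover have "Re (hip \<mu> (M w) w) = 0" using z[OF w] .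
  moreover have "hip \<mu> (M y) x = hip \<mu> y y" using M(2) x y by (simp add: sa_def y_def)
  ultimately have "Re (hip \<mu> y y) = 0" using e by simp
  then show ?thesis using hip_self_zero[OF y] by (simp add: y_def)
qed

lemma sqrt_unique:
  fixes W V :: "('g, 'r::finite, 's::finite) mfun \<Rightarrow> ('g, 'r, 's) mfun"
  assumes W: "good \<mu> W" "sa \<mu> W" "pos \<mu> W" and Wb: "\<exists>C. \<forall>f\<in>L2 \<mu>. L2norm \<mu> (W f) \<le> C * L2norm \<mu> f"
    and V: "good \<mu> V" "sa \<mu> V" "pos \<mu> V" and Vb: "\<exists>C. \<forall>f\<in>L2 \<mu>. L2norm \<mu> (V f) \<le> C * L2norm \<mu> f"
    and sq: "\<And>f. f \<in> L2 \<mu> \<Longrightarrow> aeq \<mu> (W (W f)) (V (V f))"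
    and x: "x \<in> L2 \<mu>"
  shows "aeq \<mu> (W x) (V x)"
proof -
  define D where "D = (\<lambda>f. msub (W f) (V f))"
  have Dg: "good \<mu> D" unfolding D_def by (rule good_sub[OF W(1) V(1)])
  have DL: "\<And>f. f \<in> L2 \<mu> \<Longrightarrow> D f \<in> L2 \<mu>" using Dg by (simp add: good_L2)
  have WL: "\<And>f. f \<in> L2 \<mu> \<Longrightarrow> W f \<in> L2 \<mu>" using W by (simp add: good_L2)
  have VL: "\<And>f. f \<in> L2 \<mu> \<Longrightarrow> V f \<in> L2 \<mu>" using V by (simp add: good_L2)
  have saW: "\<And>f g. f \<in> L2 \<mu> \<Longrightarrow> g \<in> L2 \<mu> \<Longrightarrow> hip \<mu> (W f) g = hip \<mu> f (W g)" using W by (simp add: sa_def)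
  have saV: "\<And>f g. f \<in> L2 \<mu> \<Longrightarrow> g \<in> L2 \<mu> \<Longrightarrow> hip \<mu> (V f) g = hip \<mu> f (V g)" using V by (simp add: sa_def)
  have saD: "hip \<mu> (D f) g = hip \<mu> f (D g)" if f: "f \<in> L2 \<mu>" and g: "g \<in> L2 \<mu>" for f g
    unfolding D_def using f g WL VL saW saV by (simp add: hip_msub1 hip_msub2)
  define D2 where "D2 = (\<lambda>f. D (D f))"
  have D2g: "good \<mu> D2" unfolding D2_def by (rule good_comp[OF Dg Dg])
  have D2sa: "sa \<mu> D2" unfolding sa_def D2_def using saD DL by simp
  have D2pos: "pos \<mu> D2" unfolding pos_def D2_def
  proof
    fix f :: "('g, 'r, 's) mfun" assume f: "f \<in> L2 \<mu>"
    show "0 \<le> Re (hip \<mu> (D (D f)) f)" using saD[OF DL[OF f] f] hip_self_nonneg[OF DL[OF f]] by simp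
  qed
  have m1: "\<And>h. msmult (-1) (msmult (-1) h) = h" by (simp add: msmult_def vec_eq_iff)
  have a: "aeq \<mu> (W (D y)) (msmult (-1) (D (V y)))" if y: "y \<in> L2 \<mu>" for y
  proof -
    have "aeq \<mu> (W (D y)) (msub (W (W y)) (W (V y)))"
      unfolding D_def by (rule good_msub[OF W(1) WL[OF y] VL[OF y]])
    moreover have "aeq \<mu> (msub (W (W y)) (W (V y))) (msub (V (V y)) (W (V y)))"
      by (rule aeq_msub[OF sq[OF y] aeq_refl])
    moreover have "msub (V (V y)) (W (V y)) = msmult (-1) (D (V y))"
      by (simp add: D_def msub_def madd_def msmult_def vec_eq_iff)
    ultimately show ?thesis by (metis aeq_trans)
  qed
  have b: "aeq \<mu> (V (D y)) (msmult (-1) (D (W y)))" if y: "y \<in> L2 \<mu>" for y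
  proof -
    have "aeq \<mu> (V (D y)) (msub (V (W y)) (V (V y)))"
      unfolding D_def by (rule good_msub[OF V(1) WL[OF y] VL[OF y]])
    moreover have "aeq \<mu> (msub (V (W y)) (V (V y))) (msub (V (W y)) (W (W y)))"
      by (rule aeq_msub[OF aeq_refl aeq_sym[OF sq[OF y]]])
    moreover have "msub (V (W y)) (W (W y)) = msmult (-1) (D (W y))"
      by (simp add: D_def msub_def madd_def msmult_def vec_eq_iff)
    ultimately show ?thesis by (metis aeq_trans)
  qed
  have cW: "comm \<mu> W D2" unfolding comm_def D2_def
  proof
    fix y :: "('g, 'r, 's) mfun" assume y: "y \<in> L2 \<mu>"
    have 1: "aeq \<mu> (W (D (D y))) (msmult (-1) (D (V (D y))))" by (rule a[OF DL[OF y]])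
    have 2: "aeq \<mu> (D (V (D y))) (D (msmult (-1) (D (W y))))"
      by (rule good_aeq[OF Dg VL[OF DL[OF y]] msmult_L2[OF DL[OF WL[OF y]]] b[OF y]])
    have 3: "aeq \<mu> (D (msmult (-1) (D (W y)))) (msmult (-1) (D (D (W y))))"
      by (rule good_smult[OF Dg DL[OF WL[OF y]]])
    have "aeq \<mu> (W (D (D y))) (msmult (-1) (msmult (-1) (D (D (W y)))))"
      by (rule aeq_trans[OF 1 aeq_msmult[OF aeq_trans[OF 2 3]]])
    then show "aeq \<mu> (W (D (D y))) (D (D (W y)))" by (simp only: m1)
  qed
  have cV: "comm \<mu> V D2" unfolding comm_def D2_def
  proof
    fix y :: "('g, 'r, 's) mfun" assume y: "y \<in> L2 \<mu>"
    have 1: "aeq \<mu> (V (D (D y))) (msmult (-1) (D (W (D y))))" by (rule b[OF DL[OF y]])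
    have 2: "aeq \<mu> (D (W (D y))) (D (msmult (-1) (D (V y))))"
      by (rule good_aeq[OF Dg WL[OF DL[OF y]] msmult_L2[OF DL[OF VL[OF y]]] a[OF y]])
    have 3: "aeq \<mu> (D (msmult (-1) (D (V y)))) (msmult (-1) (D (D (V y))))"
      by (rule good_smult[OF Dg DL[OF VL[OF y]]])
    have "aeq \<mu> (V (D (D y))) (msmult (-1) (msmult (-1) (D (D (V y)))))"
      by (rule aeq_trans[OF 1 aeq_msmult[OF aeq_trans[OF 2 3]]])
    then show "aeq \<mu> (V (D (D y))) (D (D (V y)))" by (simp only: m1)
  qed
  have zW: "Re (hip \<mu> (D (D (W y))) y) = 0" if y: "y \<in> L2 \<mu>" for y
  proof -
    have "Re (hip \<mu> (D2 (W y)) y) \<ge> 0" by (rule key_lemma[OF W Wb D2g D2sa D2pos cW y])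
    moreover have "Re (hip \<mu> (V (D y)) (D y)) \<ge> 0" using V(3) DL[OF y] by (simp add: pos_def)
    moreover have "hip \<mu> (V (D y)) (D y) = hip \<mu> (msmult (-1) (D (W y))) (D y)"
      by (rule hip_aeq1[OF VL[OF DL[OF y]] msmult_L2[OF DL[OF WL[OF y]]] DL[OF y] b[OF y]])
    moreover have "hip \<mu> (msmult (-1) (D (W y))) (D y) = - hip \<mu> (D (D (W y))) y"
      using DL WL y saD[OF DL[OF WL[OF y]] y] by (simp add: hip_smult1)
    ultimately show ?thesis by (simp add: D2_def)
  qed
  have zV: "Re (hip \<mu> (D (D (V y))) y) = 0" if y: "y \<in> L2 \<mu>" for y
  proof -
    have "Re (hip \<mu> (D2 (V y)) y) \<ge> 0" by (rule key_lemma[OF V Vb D2g D2sa D2pos cV y])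
    moreover have "Re (hip \<mu> (W (D y)) (D y)) \<ge> 0" using W(3) DL[OF y] by (simp add: pos_def)
    moreover have "hip \<mu> (W (D y)) (D y) = hip \<mu> (msmult (-1) (D (V y))) (D y)"
      by (rule hip_aeq1[OF WL[OF DL[OF y]] msmult_L2[OF DL[OF VL[OF y]]] DL[OF y] a[OF y]])
    moreover have "hip \<mu> (msmult (-1) (D (V y))) (D y) = - hip \<mu> (D (D (V y))) y"
      using DL VL y saD[OF DL[OF VL[OF y]] y] by (simp add: hip_smult1)
    ultimately show ?thesis by (simp add: D2_def)
  qed
  define M where "M = (\<lambda>f. D (D (D f)))"
  have Mg: "good \<mu> M" unfolding M_def by (rule good_comp[OF Dg good_comp[OF Dg Dg]])
  have Msa: "sa \<mu> M" unfolding sa_def M_def using saD DL by simp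
  have Mz: "Re (hip \<mu> (M y) y) = 0" if y: "y \<in> L2 \<mu>" for y
  proof -
    have e: "M y = D2 (msub (W y) (V y))" unfolding M_def D2_def D_def by simp
    have "hip \<mu> (M y) y = hip \<mu> (msub (D2 (W y)) (D2 (V y))) y"
      unfolding e
      by (rule hip_aeq1[OF good_L2[OF D2g msub_L2[OF WL[OF y] VL[OF y]]] msub_L2[OF good_L2[OF D2g WL[OF y]] good_L2[OF D2g VL[OF y]]] y good_msub[OF D2g WL[OF y] VL[OF y]]])
    then have "hip \<mu> (M y) y = hip \<mu> (msub (D (D (W y))) (D (D (V y)))) y" by (simp add: D2_def)
    then show ?thesis using zW[OF y] zV[OF y] DL WL VL y by (simp add: hip_msub1)
  qed
  have M0: "aeq \<mu> (M y) (\<lambda>x. 0)" if y: "y \<in> L2 \<mu>" for y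
    by (rule polar_zero[OF Mg Msa Mz y])
  have "hip \<mu> (D (D x)) (D (D x)) = hip \<mu> (D x) (M x)"
    unfolding M_def using saD DL x by simp
  also have "\<dots> = 0" by (rule hip_aeq_zero2[OF DL[OF x] Mg[THEN good_L2, OF x] M0[OF x]])
  finally have "aeq \<mu> (D (D x)) (\<lambda>x. 0)" using hip_self_zero[OF DL[OF DL[OF x]]] by simp
  then have "hip \<mu> x (D (D x)) = 0" by (rule hip_aeq_zero2[OF x DL[OF DL[OF x]]])
  then have "hip \<mu> (D x) (D x) = 0" using saD[OF x DL[OF x]] by simp
  then have "aeq \<mu> (D x) (\<lambda>x. 0)" using hip_self_zero[OF DL[OF x]] by simp
  then show ?thesis unfolding D_def by (rule msub_zero_aeq)
qed




definition lmul :: "complex^'s^'s \<Rightarrow> ('g, 'r::finite, 's::finite) mfun \<Rightarrow> ('g, 'r, 's) mfun" where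
  "lmul A f = (\<lambda>x. A ** f x)"

lemma lmul_entry: "lmul A f x $ i $ j = (\<Sum>l\<in>UNIV. A $ i $ l * f x $ l $ j)"
  by (simp add: lmul_def matrix_matrix_mult_def)

lemma lmul_lmul: "lmul A (lmul B f) = lmul (A ** B) f"
  by (simp add: lmul_def matrix_mul_assoc)

lemma lmul_id: "lmul (mat 1) f = f"
  by (simp add: lmul_def)

lemma madd_eq_plus: "madd f g = (\<lambda>x. f x + g x)"
  by (simp add: madd_def vec_eq_iff fun_eq_iff)

lemma L2_sum:
  fixes g :: "'k \<Rightarrow> ('g, 'r::finite, 's::finite) mfun"
  assumes "finite S" "\<And>k. k \<in> S \<Longrightarrow> g k \<in> L2 \<mu>"
  shows "(\<lambda>x. \<Sum>k\<in>S. g k x) \<in> L2 \<mu>"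
  using assms
proof (induction S rule: finite_induct)
  case empty
  then show ?case using zero_L2 by simp
next
  case (insert k S)
  have "(\<lambda>x. \<Sum>k\<in>insert k S. g k x) = madd (g k) (\<lambda>x. \<Sum>k\<in>S. g k x)"
    using insert(1,2) by (simp add: madd_eq_plus)
  then show ?case using insert by (simp add: madd_L2)
qed

lemma lmul_L2:
  assumes f: "f \<in> L2 \<mu>"
  shows "lmul A f \<in> L2 \<mu>"
proof -
  define t where "t = (\<lambda>l x. \<chi> i j. A $ i $ l * f x $ l $ j)"
  have "lmul A f = (\<lambda>x. \<Sum>l\<in>UNIV. t l x)"
    by (simp add: t_def fun_eq_iff vec_eq_iff lmul_entry)
  moreover have "t l \<in> L2 \<mu>" for l
    unfolding L2_def mem_Collect_eq
  proof (intro allI conjI)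
    fix i j
    show "(\<lambda>x. t l x $ i $ j) \<in> borel_measurable \<mu>"
      using L2_meas[OF f] by (simp add: t_def)
    show "integrable \<mu> (\<lambda>x. (cmod (t l x $ i $ j))\<^sup>2)"
      using L2_int[OF f, of l j] by (simp add: t_def norm_mult power_mult_distrib)
  qed
  ultimately show ?thesis by (simp add: L2_sum)
qed

lemma lmul_aeq: "aeq \<mu> f g \<Longrightarrow> aeq \<mu> (lmul A f) (lmul A g)"
  unfolding aeq_def lmul_def by (erule AE_mp) auto

lemma lmul_lin: "lmul A (madd (msmult a f) (msmult b g)) = madd (msmult a (lmul A f)) (msmult b (lmul A g))"
  by (simp add: fun_eq_iff vec_eq_iff lmul_entry madd_def msmult_def sum.distrib sum_distrib_left algebra_simps)

lemma good_lmul: "good \<mu> (lmul A)"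
  unfolding good_def by (simp add: lmul_L2 lmul_aeq lmul_lin)

lemma mip_lmul1:
  assumes f: "f \<in> L2 \<mu>" and g: "g \<in> L2 \<mu>"
  shows "mip \<mu> (lmul A f) g = A ** mip \<mu> f g"
proof -
  have "mip \<mu> (lmul A f) g $ i $ k = (A ** mip \<mu> f g) $ i $ k" for i k
  proof -
    have "mip \<mu> (lmul A f) g $ i $ k =
      (LINT x|\<mu>. (\<Sum>l\<in>UNIV. A $ i $ l * (\<Sum>j\<in>UNIV. f x $ l $ j * cnj (g x $ k $ j))))"
    proof -
      have "\<And>x. (\<Sum>j\<in>UNIV. (\<Sum>l\<in>UNIV. A $ i $ l * f x $ l $ j) * cnj (g x $ k $ j)) =
         (\<Sum>l\<in>UNIV. A $ i $ l * (\<Sum>j\<in>UNIV. f x $ l $ j * cnj (g x $ k $ j)))"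
        by (simp only: sum_distrib_right sum_distrib_left mult.assoc) (rule sum.swap)
      then show ?thesis unfolding mip_entry lmul_entry by simp
    qed
    also have "\<dots> = (\<Sum>l\<in>UNIV. A $ i $ l * (LINT x|\<mu>. (\<Sum>j\<in>UNIV. f x $ l $ j * cnj (g x $ k $ j))))"
      using sumprod_int[OF f g] by (simp add: integral_sum)
    also have "\<dots> = (A ** mip \<mu> f g) $ i $ k"
      by (simp add: matrix_matrix_mult_def mip_entry)
    finally show ?thesis .
  qed
  then show ?thesis by (simp add: vec_eq_iff)
qed

definition cadj :: "complex^'s^'s \<Rightarrow> complex^'s^'s" where
  "cadj A = (\<chi> a b. cnj (A $ b $ a))"

lemma mip_lmul2:
  assumes f: "f \<in> L2 \<mu>" and g: "g \<in> L2 \<mu>"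
  shows "mip \<mu> f (lmul B g) = mip \<mu> f g ** cadj B"
proof -
  have "mip \<mu> f (lmul B g) $ i $ k = (mip \<mu> f g ** cadj B) $ i $ k" for i k
  proof -
    have "mip \<mu> f (lmul B g) $ i $ k = cnj (mip \<mu> (lmul B g) f $ k $ i)"
      by (simp add: mip_cnj)
    also have "\<dots> = cnj ((B ** mip \<mu> g f) $ k $ i)" using mip_lmul1[OF g f] by simp
    also have "\<dots> = (\<Sum>l\<in>UNIV. cnj (B $ k $ l) * cnj (mip \<mu> g f $ l $ i))"
      by (simp add: matrix_matrix_mult_def)
    also have "\<dots> = (mip \<mu> f g ** cadj B) $ i $ k"
      by (simp add: matrix_matrix_mult_def cadj_def mip_cnj mult.commute)
    finally show ?thesis .
  qed
  then show ?thesis by (simp add: vec_eq_iff)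
qed

lemma mtrace_comm: "mtrace (A ** M) = mtrace (M ** (A :: complex^'s^'s))"
proof -
  have "mtrace (A ** M) = (\<Sum>i\<in>UNIV. \<Sum>k\<in>UNIV. A $ i $ k * M $ k $ i)"
    by (simp add: mtrace_def matrix_matrix_mult_def)
  also have "\<dots> = (\<Sum>k\<in>UNIV. \<Sum>i\<in>UNIV. A $ i $ k * M $ k $ i)" by (rule sum.swap)
  also have "\<dots> = mtrace (M ** A)"
    by (simp add: mtrace_def matrix_matrix_mult_def mult.commute)
  finally show ?thesis .
qed

lemma hip_lmul1: "f \<in> L2 \<mu> \<Longrightarrow> g \<in> L2 \<mu> \<Longrightarrow> hip \<mu> (lmul A f) g = mtrace (A ** mip \<mu> f g)"
  by (simp add: hip_def mip_lmul1)

lemma hip_lmul_herm: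
  assumes f: "f \<in> L2 \<mu>" and g: "g \<in> L2 \<mu>" and A: "cadj A = A"
  shows "hip \<mu> (lmul A f) g = hip \<mu> f (lmul A g)"
proof -
  have "hip \<mu> (lmul A f) g = mtrace (A ** mip \<mu> f g)" by (rule hip_lmul1[OF f g])
  also have "\<dots> = mtrace (mip \<mu> f g ** cadj A)" using A by (simp add: mtrace_comm)
  also have "\<dots> = hip \<mu> f (lmul A g)" by (simp add: hip_def mip_lmul2[OF f g])
  finally show ?thesis .
qed




lemma T_lmul_comm:
  fixes T Ts :: "('g, 'r::finite, 's::finite) mfun \<Rightarrow> ('g, 'r, 's) mfun"
  assumes Tg: "good \<mu> T" and Tsa: "sa \<mu> T" and Tsg: "good \<mu> Ts"
    and adj: "\<forall>f\<in>L2 \<mu>. \<forall>g\<in>L2 \<mu>. hip \<mu> (T f) g = hip \<mu> f (Ts g)"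
    and H: "\<forall>f\<in>L2 \<mu>. \<forall>g\<in>L2 \<mu>. mip \<mu> (T f) g = mip \<mu> f (Ts g)"
    and f: "f \<in> L2 \<mu>"
  shows "aeq \<mu> (T (lmul A f)) (lmul A (T f))"
proof -
  have TL: "\<And>h. h \<in> L2 \<mu> \<Longrightarrow> T h \<in> L2 \<mu>" using Tg by (simp add: good_L2)
  have TsL: "\<And>h. h \<in> L2 \<mu> \<Longrightarrow> Ts h \<in> L2 \<mu>" using Tsg by (simp add: good_L2)
  have saT: "\<And>u v. u \<in> L2 \<mu> \<Longrightarrow> v \<in> L2 \<mu> \<Longrightarrow> hip \<mu> (T u) v = hip \<mu> u (T v)" using Tsa by (simp add: sa_def)
  have Tseq: "aeq \<mu> (Ts g) (T g)" if g: "g \<in> L2 \<mu>" for g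
  proof -
    define h where "h = msub (Ts g) (T g)"
    have h: "h \<in> L2 \<mu>" using TL TsL g by (simp add: h_def msub_L2)
    have "hip \<mu> h (msub (Ts g) (T g)) = hip \<mu> h (Ts g) - hip \<mu> h (T g)"
      by (rule hip_msub2[OF TsL[OF g] TL[OF g] h])
    then have "hip \<mu> h h = hip \<mu> h (Ts g) - hip \<mu> h (T g)" by (simp only: h_def[symmetric])
    also have "hip \<mu> h (Ts g) = hip \<mu> h (T g)" using adj h g saT by metis
    finally have "hip \<mu> h h = 0" by simp
    then have "aeq \<mu> h (\<lambda>x. 0)" using hip_self_zero[OF h] by simp
    then show ?thesis unfolding h_def by (rule msub_zero_aeq)
  qed
  have mipT: "mip \<mu> (T u) g = mip \<mu> u (T g)" if u: "u \<in> L2 \<mu>" and g: "g \<in> L2 \<mu>" for u g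
    using H u g mip_aeq2[OF u TsL[OF g] TL[OF g] Tseq[OF g]] by simp
  define u where "u = T (lmul A f)"
  define v where "v = lmul A (T f)"
  have uL: "u \<in> L2 \<mu>" unfolding u_def by (rule TL[OF lmul_L2[OF f]])
  have vL: "v \<in> L2 \<mu>" unfolding v_def by (rule lmul_L2[OF TL[OF f]])
  have huv: "hip \<mu> u g = hip \<mu> v g" if g: "g \<in> L2 \<mu>" for g
  proof -
    have "hip \<mu> u g = hip \<mu> (lmul A f) (T g)" unfolding u_def by (rule saT[OF lmul_L2[OF f] g])
    also have "\<dots> = mtrace (A ** mip \<mu> f (T g))" by (rule hip_lmul1[OF f TL[OF g]])
    also have "\<dots> = mtrace (A ** mip \<mu> (T f) g)" using mipT[OF f g] by simp
    also have "\<dots> = hip \<mu> v g" unfolding v_def by (rule hip_lmul1[OF TL[OF f] g, symmetric])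
    finally show ?thesis .
  qed
  define h where "h = msub u v"
  have h: "h \<in> L2 \<mu>" using uL vL by (simp add: h_def msub_L2)
  have "hip \<mu> h h = hip \<mu> u h - hip \<mu> v h" unfolding h_def using uL vL h[unfolded h_def] by (simp add: hip_msub1)
  then have "hip \<mu> h h = 0" using huv[OF h] by simp
  then have "aeq \<mu> h (\<lambda>x. 0)" using hip_self_zero[OF h] by simp
  then show ?thesis unfolding h_def u_def v_def by (rule msub_zero_aeq)
qed

lemma W_inv_comm:
  fixes W T :: "('g, 'r::finite, 's::finite) mfun \<Rightarrow> ('g, 'r, 's) mfun"
  assumes W: "good \<mu> W" "sa \<mu> W" "pos \<mu> W" and Wb: "\<exists>C. \<forall>f\<in>L2 \<mu>. L2norm \<mu> (W f) \<le> C * L2norm \<mu> f"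
    and Tg: "good \<mu> T"
    and sq: "\<And>f. f \<in> L2 \<mu> \<Longrightarrow> aeq \<mu> (W (W f)) (T f)"
    and Tc: "\<And>f. f \<in> L2 \<mu> \<Longrightarrow> aeq \<mu> (T (lmul A f)) (lmul A (T f))"
    and A: "cadj A = A" "A ** A = mat 1"
    and f: "f \<in> L2 \<mu>"
  shows "aeq \<mu> (W (lmul A f)) (lmul A (W f))"
proof -
  have AA: "\<And>h. lmul A (lmul A h) = h" by (simp add: lmul_lmul A lmul_id)
  have WL: "\<And>h. h \<in> L2 \<mu> \<Longrightarrow> W h \<in> L2 \<mu>" using W by (simp add: good_L2)
  have TL: "\<And>h. h \<in> L2 \<mu> \<Longrightarrow> T h \<in> L2 \<mu>" using Tg by (simp add: good_L2)
  have saW: "\<And>u v. u \<in> L2 \<mu> \<Longrightarrow> v \<in> L2 \<mu> \<Longrightarrow> hip \<mu> (W u) v = hip \<mu> u (W v)" using W by (simp add: sa_def)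
  define V where "V = (\<lambda>h. lmul A (W (lmul A h)))"
  have Vg: "good \<mu> V" unfolding V_def by (rule good_comp[OF good_lmul good_comp[OF W(1) good_lmul]])
  have Vsa: "sa \<mu> V" unfolding sa_def V_def
  proof (intro ballI)
    fix u v :: "('g, 'r, 's) mfun" assume u: "u \<in> L2 \<mu>" and v: "v \<in> L2 \<mu>"
    have "hip \<mu> (lmul A (W (lmul A u))) v = hip \<mu> (W (lmul A u)) (lmul A v)"
      by (rule hip_lmul_herm[OF WL[OF lmul_L2[OF u]] v A(1)])
    also have "\<dots> = hip \<mu> (lmul A u) (W (lmul A v))" by (rule saW[OF lmul_L2[OF u] lmul_L2[OF v]])
    also have "\<dots> = hip \<mu> u (lmul A (W (lmul A v)))" by (rule hip_lmul_herm[OF u WL[OF lmul_L2[OF v]] A(1)])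
    finally show "hip \<mu> (lmul A (W (lmul A u))) v = hip \<mu> u (lmul A (W (lmul A v)))" .
  qed
  have Vpos: "pos \<mu> V" unfolding pos_def V_def
  proof
    fix u :: "('g, 'r, 's) mfun" assume u: "u \<in> L2 \<mu>"
    have "hip \<mu> (lmul A (W (lmul A u))) u = hip \<mu> (W (lmul A u)) (lmul A u)"
      by (rule hip_lmul_herm[OF WL[OF lmul_L2[OF u]] u A(1)])
    then show "0 \<le> Re (hip \<mu> (lmul A (W (lmul A u))) u)" using W(3) lmul_L2[OF u] by (simp add: pos_def)
  qed
  have nrm: "L2norm \<mu> (lmul A h) = L2norm \<mu> h" if h: "h \<in> L2 \<mu>" for h
  proof -
    have "hip \<mu> (lmul A h) (lmul A h) = hip \<mu> h (lmul A (lmul A h))"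
      by (rule hip_lmul_herm[OF h lmul_L2[OF h] A(1)])
    then show ?thesis by (simp add: L2norm_def AA)
  qed
  have Vb: "\<exists>C. \<forall>f\<in>L2 \<mu>. L2norm \<mu> (V f) \<le> C * L2norm \<mu> f"
  proof -
    obtain C where C: "\<forall>f\<in>L2 \<mu>. L2norm \<mu> (W f) \<le> C * L2norm \<mu> f" using Wb by blast
    have "\<forall>f\<in>L2 \<mu>. L2norm \<mu> (V f) \<le> C * L2norm \<mu> f"
    proof
      fix u :: "('g, 'r, 's) mfun" assume u: "u \<in> L2 \<mu>"
      have "L2norm \<mu> (V u) = L2norm \<mu> (W (lmul A u))" unfolding V_def by (rule nrm[OF WL[OF lmul_L2[OF u]]])
      also have "\<dots> \<le> C * L2norm \<mu> (lmul A u)" using C lmul_L2[OF u] by blast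
      also have "\<dots> = C * L2norm \<mu> u" using nrm[OF u] by simp
      finally show "L2norm \<mu> (V u) \<le> C * L2norm \<mu> u" .
    qed
    then show ?thesis by blast
  qed
  have sqV: "aeq \<mu> (W (W h)) (V (V h))" if h: "h \<in> L2 \<mu>" for h
  proof -
    have e: "V (V h) = lmul A (W (W (lmul A h)))" by (simp add: V_def AA)
    have "aeq \<mu> (lmul A (W (W (lmul A h)))) (lmul A (T (lmul A h)))"
      by (rule lmul_aeq[OF sq[OF lmul_L2[OF h]]])
    moreover have "aeq \<mu> (lmul A (T (lmul A h))) (lmul A (lmul A (T h)))"
      by (rule lmul_aeq[OF Tc[OF h]])
    ultimately have "aeq \<mu> (V (V h)) (T h)" unfolding e AA by (rule aeq_trans)
    then show ?thesis using sq[OF h] by (metis aeq_sym aeq_trans)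
  qed
  have "aeq \<mu> (W f) (V f)" by (rule sqrt_unique[OF W Wb Vg Vsa Vpos Vb sqV f])
  then have "aeq \<mu> (lmul A (W f)) (lmul A (V f))" by (rule lmul_aeq)
  then have "aeq \<mu> (lmul A (W f)) (W (lmul A f))" by (simp add: V_def AA)
  then show ?thesis by (rule aeq_sym)
qed

definition Dm :: "'s::finite \<Rightarrow> complex^'s^'s" where
  "Dm k = (\<chi> a b. if a = b then (if a = k then -1 else 1) else 0)"
definition sw :: "'s \<Rightarrow> 's \<Rightarrow> 's \<Rightarrow> 's" where
  "sw k l a = (if a = k then l else if a = l then k else a)"
definition Pm :: "'s::finite \<Rightarrow> 's \<Rightarrow> complex^'s^'s" where
  "Pm k l = (\<chi> a b. if b = sw k l a then 1 else 0)"
definition Em :: "'s::finite \<Rightarrow> complex^'s^'s" where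
  "Em k = (\<chi> a b. if a = k \<and> b = k then 1 else 0)"

lemma if_mult0: "(if P then x else 0) * (z::complex) = (if P then x * z else 0)" by simp

lemma sw_sw[simp]: "sw k l (sw k l a) = a" by (simp add: sw_def)
lemma sw_eq: "(a = sw k l b) \<longleftrightarrow> (sw k l a = b)" by (auto simp: sw_def)

lemma Dm_mul: "(Dm k ** M) $ a $ c = (if a = k then -1 else 1) * M $ a $ c"
  by (simp add: matrix_matrix_mult_def Dm_def if_mult0 sum.delta cong: if_cong)

lemma Pm_mul: "(Pm k l ** M) $ a $ c = M $ (sw k l a) $ c"
  by (simp add: matrix_matrix_mult_def Pm_def if_mult0 sum.delta' cong: if_cong)

lemma Em_mul: "(Em k ** M) $ a $ c = (if a = k then M $ k $ c else 0)"
  by (simp add: matrix_matrix_mult_def Em_def if_mult0 sum.delta' cong: if_cong)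

lemma Dm_sq: "Dm k ** Dm k = mat 1"
  by (simp add: vec_eq_iff Dm_mul) (simp add: Dm_def mat_def)

lemma Pm_sq: "Pm k l ** Pm k l = mat 1"
  by (simp add: vec_eq_iff Pm_mul) (auto simp: Pm_def mat_def)

lemma Dm_herm: "cadj (Dm k) = Dm k"
  by (simp add: vec_eq_iff cadj_def Dm_def)

lemma Pm_herm: "cadj (Pm k l) = Pm k l"
  by (simp add: vec_eq_iff cadj_def Pm_def sw_eq) (metis sw_sw)

lemma mtrace_Em: "mtrace (Em k ** N) = N $ k $ k"
  by (simp add: mtrace_def Em_mul)

lemma Em_expr: "lmul (Em k) f = msmult (1/2) (msub f (lmul (Dm k) f))"
  by (simp add: lmul_def fun_eq_iff vec_eq_iff Em_mul Dm_mul msmult_def msub_def madd_def)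

lemma W_Em_comm:
  fixes W :: "('g, 'r::finite, 's::finite) mfun \<Rightarrow> ('g, 'r, 's) mfun"
  assumes W: "good \<mu> W" and D: "\<And>f. f \<in> L2 \<mu> \<Longrightarrow> aeq \<mu> (W (lmul (Dm k) f)) (lmul (Dm k) (W f))"
    and f: "f \<in> L2 \<mu>"
  shows "aeq \<mu> (W (lmul (Em k) f)) (lmul (Em k) (W f))"
proof -
  have DfL: "lmul (Dm k) f \<in> L2 \<mu>" by (rule lmul_L2[OF f])
  have 1: "aeq \<mu> (W (msmult (1/2) (msub f (lmul (Dm k) f)))) (msmult (1/2) (W (msub f (lmul (Dm k) f))))"
    by (rule good_smult[OF W msub_L2[OF f DfL]])
  have 2: "aeq \<mu> (W (msub f (lmul (Dm k) f))) (msub (W f) (W (lmul (Dm k) f)))"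
    by (rule good_msub[OF W f DfL])
  have 3: "aeq \<mu> (msub (W f) (W (lmul (Dm k) f))) (msub (W f) (lmul (Dm k) (W f)))"
    by (rule aeq_msub[OF aeq_refl D[OF f]])
  show ?thesis unfolding Em_expr
    by (rule aeq_trans[OF 1 aeq_msmult[OF aeq_trans[OF 2 3]]])
qed




theorem proposition3p5:
  fixes \<mu> :: "'g::{topological_ab_group_add, metric_space} measure"
    and T Ts W Ws :: "('g, 'r::finite, 's::finite) mfun \<Rightarrow> ('g, 'r, 's) mfun"
  assumes "locally_compact_sigma_compact TYPE('g)"
    and "haar_measure \<mu>"
    and "bounded_linear_op \<mu> T"
    and "positive_op \<mu> T"
    and "is_adjoint \<mu> T Ts"
    and "\<forall>f\<in>L2 \<mu>. \<forall>g\<in>L2 \<mu>. mip \<mu> (T f) g = mip \<mu> f (Ts g)"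
    and "is_sqrt_op \<mu> T W"
    and "is_adjoint \<mu> W Ws"
  shows "\<forall>f\<in>L2 \<mu>. \<forall>g\<in>L2 \<mu>. mip \<mu> (W f) g = mip \<mu> f (Ws g)"
proof (intro ballI)
  fix f g :: "('g, 'r, 's) mfun" assume f: "f \<in> L2 \<mu>" and g: "g \<in> L2 \<mu>"
  have Tg: "good \<mu> T" using assms(3) by (rule blo_good)
  have Tsa: "sa \<mu> T" using assms(4) by (simp add: positive_op_def is_adjoint_def sa_def)
  have Tsg: "good \<mu> Ts" using assms(5) by (simp add: is_adjoint_def blo_good)
  have Tadj: "\<forall>f\<in>L2 \<mu>. \<forall>g\<in>L2 \<mu>. hip \<mu> (T f) g = hip \<mu> f (Ts g)" using assms(5) by (simp add: is_adjoint_def)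
  have Wblo: "bounded_linear_op \<mu> W" using assms(7) by (simp add: is_sqrt_op_def)
  have Wg: "good \<mu> W" using Wblo by (rule blo_good)
  have Wb: "\<exists>C. \<forall>f\<in>L2 \<mu>. L2norm \<mu> (W f) \<le> C * L2norm \<mu> f" using Wblo by (simp add: bounded_linear_op_def)
  have Wsa: "sa \<mu> W" using assms(7) by (simp add: is_sqrt_op_def positive_op_def is_adjoint_def sa_def)
  have Wpos: "pos \<mu> W" using assms(7) by (simp add: is_sqrt_op_def positive_op_def pos_def)
  have sq: "\<And>h. h \<in> L2 \<mu> \<Longrightarrow> aeq \<mu> (W (W h)) (T h)" using assms(7) by (simp add: is_sqrt_op_def aeq_def)
  have Wadj: "\<And>u v. u \<in> L2 \<mu> \<Longrightarrow> v \<in> L2 \<mu> \<Longrightarrow> hip \<mu> (W u) v = hip \<mu> u (Ws v)"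
    using assms(8) by (simp add: is_adjoint_def)
  have WsL: "Ws g \<in> L2 \<mu>" using assms(8) g by (simp add: is_adjoint_def bounded_linear_op_def)
  have WL: "\<And>h. h \<in> L2 \<mu> \<Longrightarrow> W h \<in> L2 \<mu>" using Wg by (simp add: good_L2)
  have Tc: "\<And>h A. h \<in> L2 \<mu> \<Longrightarrow> aeq \<mu> (T (lmul A h)) (lmul A (T h))"
    by (rule T_lmul_comm[OF Tg Tsa Tsg Tadj assms(6)])
  have WD: "\<And>h k. h \<in> L2 \<mu> \<Longrightarrow> aeq \<mu> (W (lmul (Dm k) h)) (lmul (Dm k) (W h))"
    by (rule W_inv_comm[OF Wg Wsa Wpos Wb Tg sq Tc Dm_herm Dm_sq])
  have WP: "\<And>h k l. h \<in> L2 \<mu> \<Longrightarrow> aeq \<mu> (W (lmul (Pm k l) h)) (lmul (Pm k l) (W h))"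
    by (rule W_inv_comm[OF Wg Wsa Wpos Wb Tg sq Tc Pm_herm Pm_sq])
  have WE: "\<And>h k. h \<in> L2 \<mu> \<Longrightarrow> aeq \<mu> (W (lmul (Em k) h)) (lmul (Em k) (W h))"
    by (rule W_Em_comm[OF Wg WD])
  have ext: "hip \<mu> (lmul (Em k) (lmul (Pm k l) h)) u = mip \<mu> h u $ l $ k"
    if h: "h \<in> L2 \<mu>" and u: "u \<in> L2 \<mu>" for h u k l
  proof -
    have "hip \<mu> (lmul (Em k) (lmul (Pm k l) h)) u = mtrace (Em k ** (Pm k l ** mip \<mu> h u))"
      by (simp add: hip_lmul1[OF lmul_L2[OF h] u] mip_lmul1[OF h u])
    also have "\<dots> = mip \<mu> h u $ l $ k" by (simp add: mtrace_Em Pm_mul sw_def)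
    finally show ?thesis .
  qed
  have "mip \<mu> (W f) g $ l $ k = mip \<mu> f (Ws g) $ l $ k" for l k
  proof -
    define R :: "('g, 'r, 's) mfun \<Rightarrow> ('g, 'r, 's) mfun" where "R = (\<lambda>h. lmul (Em k) (lmul (Pm k l) h))"
    have RL: "\<And>h. h \<in> L2 \<mu> \<Longrightarrow> R h \<in> L2 \<mu>" by (simp add: R_def lmul_L2)
    have c: "aeq \<mu> (R (W f)) (W (R f))"
    proof -
      have "aeq \<mu> (W (R f)) (lmul (Em k) (W (lmul (Pm k l) f)))"
        unfolding R_def by (rule WE[OF lmul_L2[OF f]])
      moreover have "aeq \<mu> (lmul (Em k) (W (lmul (Pm k l) f))) (lmul (Em k) (lmul (Pm k l) (W f)))"
        by (rule lmul_aeq[OF WP[OF f]])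
      ultimately show ?thesis unfolding R_def by (metis aeq_sym aeq_trans)
    qed
    have "mip \<mu> (W f) g $ l $ k = hip \<mu> (R (W f)) g" unfolding R_def by (rule ext[OF WL[OF f] g, symmetric])
    also have "\<dots> = hip \<mu> (W (R f)) g" by (rule hip_aeq1[OF RL[OF WL[OF f]] WL[OF RL[OF f]] g c])
    also have "\<dots> = hip \<mu> (R f) (Ws g)" by (rule Wadj[OF RL[OF f] g])
    also have "\<dots> = mip \<mu> f (Ws g) $ l $ k" unfolding R_def by (rule ext[OF f WsL])
    finally show ?thesis .
  qed
  then show "mip \<mu> (W f) g = mip \<mu> f (Ws g)" by (simp add: vec_eq_iff)
qed


end
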